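(* There exists a $(201,9)$-arc in $\operatorname{PG}(2,27)$; hence $m_9(2,27)\ge 201$.
   Context: Points of $\operatorname{PG}(2,q)$ are the 1-dimensional subspaces of $\operatorname{GF}(q)^3$, lines are the 2-dimensional subspaces. An $(n,r)$-arc in $\operatorname{PG}(2,q)$ is a set $\mathcal B$ of $n$ points such that every line contains at most $r$ points of $\mathcal B$ and at least one line contains exactly $r$ points of $\mathcal B$. $m_r(2,q)$ is the maximum $n$ for which an $(n,r)$-arc in $\operatorname{PG}(2,q)$ exists. *)

theory Defs
  imports Main
begin

type_synonym 'a vec3 = "'a \<times> 'a \<times> 'a"

definition vsmult :: "'a::field \<Rightarrow> 'a vec3 \<Rightarrow> 'a vec3" where
  "vsmult c v = (c * fst v, c * fst (snd v), c * snd (snd v))"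

definition vadd :: "'a::field vec3 \<Rightarrow> 'a vec3 \<Rightarrow> 'a vec3" where
  "vadd u w = (fst u + fst w, fst (snd u) + fst (snd w), snd (snd u) + snd (snd w))"

definition lin_indep2 :: "'a::field vec3 \<Rightarrow> 'a vec3 \<Rightarrow> bool" where
  "lin_indep2 u w \<longleftrightarrow> (\<forall>s t. vadd (vsmult s u) (vsmult t w) = (0,0,0) \<longrightarrow> s = 0 \<and> t = 0)"

definition pg_points :: "'a::field vec3 set set" where
  "pg_points = {S. \<exists>v. v \<noteq> (0,0,0) \<and> S = {vsmult c v | c. True}}"

definition pg_lines :: "'a::field vec3 set set" where
  "pg_lines = {S. \<exists>u w. lin_indep2 u w \<and> S = {vadd (vsmult s u) (vsmult t w) | s t. True}}"

definition is_arc :: "'a::field vec3 set set \<Rightarrow> nat \<Rightarrow> nat \<Rightarrow> bool" where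
  "is_arc B n r \<longleftrightarrow> B \<subseteq> pg_points \<and> finite B \<and> card B = n \<and>
     (\<forall>L\<in>pg_lines. card {P\<in>B. P \<subseteq> L} \<le> r) \<and>
     (\<exists>L\<in>pg_lines. card {P\<in>B. P \<subseteq> L} = r)"

definition m_arc :: "nat \<Rightarrow> 'a::field itself \<Rightarrow> nat" where
  "m_arc r _ = Max {n. \<exists>B :: 'a vec3 set set. is_arc B n r}"

end

theory Submission
  imports Defs "HOL-Computational_Algebra.Polynomial"
begin

lemma three_zero:
  assumes "card (UNIV :: 'a::{field,finite} set) = 27"
  shows "(3::'a) = 0"
proof -
  have bij: "bij_betw (\<lambda>x::'a. x + 1) UNIV UNIV"
  proof (rule bij_betw_imageI)
    show "inj_on (\<lambda>x::'a. x + 1) UNIV" by (simp add: inj_on_def)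
    show "(\<lambda>x::'a. x + 1) ` UNIV = UNIV"
    proof (rule set_eqI)
      fix y :: 'a
      have "y = (y - 1) + 1" by simp
      thus "y \<in> (\<lambda>x. x + 1) ` UNIV \<longleftrightarrow> y \<in> UNIV" by blast
    qed
  qed
  have "(\<Sum>x\<in>UNIV. (x::'a) + 1) = (\<Sum>y\<in>UNIV. y)" by (rule sum.reindex_bij_betw[OF bij])
  hence "(\<Sum>x\<in>UNIV. (x::'a)) + of_nat (card (UNIV::'a set)) = (\<Sum>y\<in>UNIV. y)"
    by (simp add: sum.distrib)
  hence "(of_nat 27 :: 'a) = 0" using assms by simp
  hence "(3::'a) * 3 * 3 = 0" by simp
  thus ?thesis by (metis mult_eq_0_iff)
qed

lemma pow27:
  assumes "card (UNIV :: 'a::{field,finite} set) = 27"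
  shows "(x::'a) ^ 27 = x"
proof (cases "x = 0")
  case True thus ?thesis by simp
next
  case False
  let ?S = "UNIV - {0::'a}"
  have inj: "inj_on (\<lambda>y. x * y) ?S" using False by (simp add: inj_on_def)
  have img: "(\<lambda>y. x * y) ` ?S = ?S"
  proof
    show "(\<lambda>y. x * y) ` ?S \<subseteq> ?S" using False by auto
    show "?S \<subseteq> (\<lambda>y. x * y) ` ?S"
    proof
      fix z assume "z \<in> ?S"
      hence "z = x * (z / x)" "z / x \<in> ?S" using False by auto
      thus "z \<in> (\<lambda>y. x * y) ` ?S" by blast
    qed
  qed
  have cS: "card ?S = 26" using assms by (simp add: card_Diff_subset)
  have "(\<Prod>y\<in>?S. x * y) = (\<Prod>z\<in>(\<lambda>y. x * y) ` ?S. z)"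
    by (simp add: prod.reindex[OF inj])
  also have "\<dots> = (\<Prod>z\<in>?S. z)" using img by simp
  finally have "x ^ 26 * (\<Prod>z\<in>?S. z) = (\<Prod>z\<in>?S. z)"
    using cS by (simp add: prod.distrib)
  moreover have "(\<Prod>z\<in>?S. z) \<noteq> 0" by simp
  ultimately have "x ^ 26 = 1" by simp
  hence "x ^ 26 * x = x" by simp
  thus ?thesis by (simp add: power_Suc2[symmetric] del: power_Suc)
qed

lemma root_exists:
  assumes "card (UNIV :: 'a::{field,finite} set) = 27"
  shows "\<exists>a::'a. a ^ 3 = a + 1"
proof (rule ccontr)
  assume no: "\<not> ?thesis"
  define Q :: "'a poly" where "Q = [:0, 1, -1, 1, 0, -1, -1, 1, 1, 1, 0, 1, 0, 0, 1, -1, 1, 0, -1, -1, 1, 1, 1, 0, 1:]"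
  have id: "(x^3 - x - 1) * poly Q x - (x^27 - x) = 3 * (x^6 - x^8 - x^9 + x^19 - x^21 - x^22)" for x :: 'a
    unfolding Q_def by simp algebra
  have "poly Q x = 0" for x :: 'a
  proof -
    have "(x^3 - x - 1) * poly Q x = 0"
      using id[of x] pow27[OF assms, of x] three_zero[OF assms] by simp
    moreover have "x^3 - x - 1 \<noteq> 0" using no by (metis add.commute diff_diff_eq eq_iff_diff_eq_0)
    ultimately show ?thesis by simp
  qed
  hence all: "{x. poly Q x = 0} = UNIV" by auto
  have "Q \<noteq> 0" unfolding Q_def by simp
  from card_poly_roots_bound[OF this] all assms have "27 \<le> degree Q" by simp
  moreover have "degree Q = 24" unfolding Q_def by simp
  ultimately show False by simp
qed

definition dot :: "'a::field vec3 \<Rightarrow> 'a vec3 \<Rightarrow> 'a" where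
  "dot n v = fst n * fst v + fst (snd n) * fst (snd v) + snd (snd n) * snd (snd v)"

definition cross :: "'a::field vec3 \<Rightarrow> 'a vec3 \<Rightarrow> 'a vec3" where
  "cross u w = (fst (snd u) * snd (snd w) - snd (snd u) * fst (snd w),
                snd (snd u) * fst w - fst u * snd (snd w),
                fst u * fst (snd w) - fst (snd u) * fst w)"

definition span1 :: "'a::field vec3 \<Rightarrow> 'a vec3 set" where
  "span1 v = {vsmult c v | c. True}"

definition span2 :: "'a::field vec3 \<Rightarrow> 'a vec3 \<Rightarrow> 'a vec3 set" where
  "span2 u w = {vadd (vsmult s u) (vsmult t w) | s t. True}"

definition nrm :: "'a::field vec3 \<Rightarrow> bool" where
  "nrm v \<longleftrightarrow> fst v = 1 \<or> (fst v = 0 \<and> fst (snd v) = 1) \<or> (fst v = 0 \<and> fst (snd v) = 0 \<and> snd (snd v) = 1)"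

lemma cross_nz:
  fixes u w :: "'a::field vec3"
  assumes "lin_indep2 u w" shows "cross u w \<noteq> (0,0,0)"
proof
  assume c: "cross u w = (0,0,0)"
  obtain u1 u2 u3 where u: "u = (u1,u2,u3)" by (cases u) auto
  obtain w1 w2 w3 where w: "w = (w1,w2,w3)" by (cases w) auto
  have e1: "u2*w3 = u3*w2" and e2: "u3*w1 = u1*w3" and e3: "u1*w2 = u2*w1"
    using c unfolding cross_def u w by auto
  have ind: "\<And>s t. vadd (vsmult s u) (vsmult t w) = (0,0,0) \<Longrightarrow> s = 0 \<and> t = 0"
    using assms unfolding lin_indep2_def by blast
  show False
  proof (cases "u = (0,0,0)")
    case True
    have "vadd (vsmult 1 u) (vsmult 0 w) = (0,0,0)" using True by (simp add: vadd_def vsmult_def)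
    thus False using ind by force
  next
    case False
    have "\<exists>s t. t \<noteq> 0 \<and> vadd (vsmult s u) (vsmult t w) = (0,0,0)"
    proof -
      consider "u1 \<noteq> 0" | "u2 \<noteq> 0" | "u3 \<noteq> 0" using False u by auto
      thus ?thesis
      proof cases
        case 1
        have "vadd (vsmult w1 u) (vsmult (-u1) w) = (0,0,0)"
          using e1 e2 e3 unfolding u w vadd_def vsmult_def by (auto simp: algebra_simps)
        moreover have "-u1 \<noteq> 0" using 1 by simp
        ultimately show ?thesis by blast
      next
        case 2
        have "vadd (vsmult w2 u) (vsmult (-u2) w) = (0,0,0)"
          using e1 e2 e3 unfolding u w vadd_def vsmult_def by (auto simp: algebra_simps)
        moreover have "-u2 \<noteq> 0" using 2 by simp
        ultimately show ?thesis by blast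
      next
        case 3
        have "vadd (vsmult w3 u) (vsmult (-u3) w) = (0,0,0)"
          using e1 e2 e3 unfolding u w vadd_def vsmult_def by (auto simp: algebra_simps)
        moreover have "-u3 \<noteq> 0" using 3 by simp
        ultimately show ?thesis by blast
      qed
    qed
    then obtain s t where st: "t \<noteq> 0" "vadd (vsmult s u) (vsmult t w) = (0,0,0)" by blast
    thus False using ind by blast
  qed
qed


lemma span2_imp:
  fixes u w v :: "'a::field vec3"
  assumes "v \<in> span2 u w" shows "dot (cross u w) v = 0"
  using assms unfolding span2_def dot_def cross_def vadd_def vsmult_def
  by (auto simp: algebra_simps)

lemma solve1:
  fixes u1 u2 u3 w1 w2 w3 v1 v2 v3 :: "'a::field"
  assumes n: "u2*w3 - u3*w2 \<noteq> 0"
    and d: "(u2*w3 - u3*w2)*v1 + (u3*w1 - u1*w3)*v2 + (u1*w2 - u2*w1)*v3 = 0"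
  shows "\<exists>s t. s*u1 + t*w1 = v1 \<and> s*u2 + t*w2 = v2 \<and> s*u3 + t*w3 = v3"
proof -
  let ?n = "u2*w3 - u3*w2"
  define s where "s = (v2*w3 - v3*w2) / ?n"
  define t where "t = (u2*v3 - u3*v2) / ?n"
  have "(v2*w3 - v3*w2)*u1 + (u2*v3 - u3*v2)*w1 = v1 * ?n" using d by algebra
  moreover have "s*u1 + t*w1 = ((v2*w3 - v3*w2)*u1 + (u2*v3 - u3*v2)*w1) / ?n"
    unfolding s_def t_def by (simp only: times_divide_eq_left add_divide_distrib)
  ultimately have 1: "s*u1 + t*w1 = v1" using n by simp
  have "(v2*w3 - v3*w2)*u2 + (u2*v3 - u3*v2)*w2 = v2 * ?n" by algebra
  moreover have "s*u2 + t*w2 = ((v2*w3 - v3*w2)*u2 + (u2*v3 - u3*v2)*w2) / ?n"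
    unfolding s_def t_def by (simp only: times_divide_eq_left add_divide_distrib)
  ultimately have 2: "s*u2 + t*w2 = v2" using n by simp
  have "(v2*w3 - v3*w2)*u3 + (u2*v3 - u3*v2)*w3 = v3 * ?n" by algebra
  moreover have "s*u3 + t*w3 = ((v2*w3 - v3*w2)*u3 + (u2*v3 - u3*v2)*w3) / ?n"
    unfolding s_def t_def by (simp only: times_divide_eq_left add_divide_distrib)
  ultimately have 3: "s*u3 + t*w3 = v3" using n by simp
  show ?thesis using 1 2 3 by blast
qed

lemma span2_iff:
  fixes u w v :: "'a::field vec3"
  assumes ind: "lin_indep2 u w"
  shows "v \<in> span2 u w \<longleftrightarrow> dot (cross u w) v = 0"
proof
  assume "v \<in> span2 u w" thus "dot (cross u w) v = 0" by (rule span2_imp)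
next
  assume d: "dot (cross u w) v = 0"
  obtain u1 u2 u3 where u: "u = (u1,u2,u3)" by (cases u) auto
  obtain w1 w2 w3 where w: "w = (w1,w2,w3)" by (cases w) auto
  obtain v1 v2 v3 where v: "v = (v1,v2,v3)" by (cases v) auto
  have nz: "cross u w \<noteq> (0,0,0)" using cross_nz[OF ind] .
  have d': "(u2*w3 - u3*w2)*v1 + (u3*w1 - u1*w3)*v2 + (u1*w2 - u2*w1)*v3 = 0"
    using d unfolding u w v dot_def cross_def by simp
  have "\<exists>s t. s*u1 + t*w1 = v1 \<and> s*u2 + t*w2 = v2 \<and> s*u3 + t*w3 = v3"
  proof -
    consider "u2*w3 - u3*w2 \<noteq> 0" | "u3*w1 - u1*w3 \<noteq> 0" | "u1*w2 - u2*w1 \<noteq> 0"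
      using nz unfolding u w cross_def by auto
    thus ?thesis
    proof cases
      case 1 show ?thesis by (rule solve1[OF 1 d'])
    next
      case 2
      have "(u3*w1 - u1*w3)*v2 + (u1*w2 - u2*w1)*v3 + (u2*w3 - u3*w2)*v1 = 0" using d' by (simp add: algebra_simps)
      from solve1[OF 2 this] show ?thesis by blast
    next
      case 3
      have "(u1*w2 - u2*w1)*v3 + (u2*w3 - u3*w2)*v1 + (u3*w1 - u1*w3)*v2 = 0" using d' by (simp add: algebra_simps)
      from solve1[OF 3 this] show ?thesis by blast
    qed
  qed
  then obtain s t where "s*u1 + t*w1 = v1" "s*u2 + t*w2 = v2" "s*u3 + t*w3 = v3" by blast
  hence "v = vadd (vsmult s u) (vsmult t w)" unfolding u w v vadd_def vsmult_def by simp
  thus "v \<in> span2 u w" unfolding span2_def by blast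
qed

lemma span2_smult:
  fixes u w v :: "'a::field vec3"
  assumes "v \<in> span2 u w" shows "vsmult c v \<in> span2 u w"
proof -
  obtain s t where "v = vadd (vsmult s u) (vsmult t w)" using assms unfolding span2_def by blast
  hence "vsmult c v = vadd (vsmult (c*s) u) (vsmult (c*t) w)"
    unfolding vadd_def vsmult_def by (simp add: algebra_simps)
  thus ?thesis unfolding span2_def by blast
qed

lemma span1_sub_iff:
  fixes u w v :: "'a::field vec3"
  shows "span1 v \<subseteq> span2 u w \<longleftrightarrow> v \<in> span2 u w"
proof
  assume "span1 v \<subseteq> span2 u w"
  moreover have "v \<in> span1 v" unfolding span1_def
    by (rule CollectI, rule exI[of _ 1]) (simp add: vsmult_def)
  ultimately show "v \<in> span2 u w" by blast
next
  assume "v \<in> span2 u w"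
  thus "span1 v \<subseteq> span2 u w" unfolding span1_def using span2_smult by blast
qed

lemma nrm_exists:
  fixes n :: "'a::field vec3"
  assumes "n \<noteq> (0,0,0)"
  shows "\<exists>c. c \<noteq> 0 \<and> nrm (vsmult c n)"
proof -
  obtain n1 n2 n3 where n: "n = (n1,n2,n3)" by (cases n) auto
  show ?thesis
  proof (cases "n1 = 0")
    case False
    thus ?thesis by (intro exI[of _ "1/n1"]) (simp add: n nrm_def vsmult_def)
  next
    case True
    show ?thesis
    proof (cases "n2 = 0")
      case False
      thus ?thesis using True by (intro exI[of _ "1/n2"]) (simp add: n nrm_def vsmult_def)
    next
      case True2: True
      hence "n3 \<noteq> 0" using assms True n by auto
      thus ?thesis using True True2 by (intro exI[of _ "1/n3"]) (simp add: n nrm_def vsmult_def)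
    qed
  qed
qed

lemma dot_smult: "dot (vsmult c n) v = c * dot n (v::'a::field vec3)"
  unfolding dot_def vsmult_def by (simp add: algebra_simps)

lemma nrm_span1_inj:
  fixes a b :: "'a::field vec3"
  assumes na: "nrm a" and nb: "nrm b" and eq: "span1 a = span1 b"
  shows "a = b"
proof -
  have "b \<in> span1 b" unfolding span1_def
    by (rule CollectI, rule exI[of _ 1]) (simp add: vsmult_def)
  hence "b \<in> span1 a" using eq by simp
  then obtain c where c: "b = vsmult c a" unfolding span1_def by blast
  obtain a1 a2 a3 where a: "a = (a1,a2,a3)" by (cases a) auto
  show ?thesis using na nb unfolding c a nrm_def vsmult_def by auto
qed

datatype gf = G0 | G1 | G2 | G3 | G4 | G5 | G6 | G7 | G8 | G9 | G10 | G11 | G12 | G13 | G14 | G15 | G16 | G17 | G18 | G19 | G20 | G21 | G22 | G23 | G24 | G25 | G26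

primrec cd :: "gf \<Rightarrow> nat \<times> nat \<times> nat" where
  "cd G0 = (0, 0, 0)"
| "cd G1 = (1, 0, 0)"
| "cd G2 = (2, 0, 0)"
| "cd G3 = (0, 1, 0)"
| "cd G4 = (1, 1, 0)"
| "cd G5 = (2, 1, 0)"
| "cd G6 = (0, 2, 0)"
| "cd G7 = (1, 2, 0)"
| "cd G8 = (2, 2, 0)"
| "cd G9 = (0, 0, 1)"
| "cd G10 = (1, 0, 1)"
| "cd G11 = (2, 0, 1)"
| "cd G12 = (0, 1, 1)"
| "cd G13 = (1, 1, 1)"
| "cd G14 = (2, 1, 1)"
| "cd G15 = (0, 2, 1)"
| "cd G16 = (1, 2, 1)"
| "cd G17 = (2, 2, 1)"
| "cd G18 = (0, 0, 2)"
| "cd G19 = (1, 0, 2)"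
| "cd G20 = (2, 0, 2)"
| "cd G21 = (0, 1, 2)"
| "cd G22 = (1, 1, 2)"
| "cd G23 = (2, 1, 2)"
| "cd G24 = (0, 2, 2)"
| "cd G25 = (1, 2, 2)"
| "cd G26 = (2, 2, 2)"

primrec ad0 :: "gf \<Rightarrow> gf" where
  "ad0 G0 = G0"
| "ad0 G1 = G1"
| "ad0 G2 = G2"
| "ad0 G3 = G3"
| "ad0 G4 = G4"
| "ad0 G5 = G5"
| "ad0 G6 = G6"
| "ad0 G7 = G7"
| "ad0 G8 = G8"
| "ad0 G9 = G9"
| "ad0 G10 = G10"
| "ad0 G11 = G11"
| "ad0 G12 = G12"
| "ad0 G13 = G13"
| "ad0 G14 = G14"
| "ad0 G15 = G15"
| "ad0 G16 = G16"
| "ad0 G17 = G17"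
| "ad0 G18 = G18"
| "ad0 G19 = G19"
| "ad0 G20 = G20"
| "ad0 G21 = G21"
| "ad0 G22 = G22"
| "ad0 G23 = G23"
| "ad0 G24 = G24"
| "ad0 G25 = G25"
| "ad0 G26 = G26"

primrec ad1 :: "gf \<Rightarrow> gf" where
  "ad1 G0 = G1"
| "ad1 G1 = G2"
| "ad1 G2 = G0"
| "ad1 G3 = G4"
| "ad1 G4 = G5"
| "ad1 G5 = G3"
| "ad1 G6 = G7"
| "ad1 G7 = G8"
| "ad1 G8 = G6"
| "ad1 G9 = G10"
| "ad1 G10 = G11"
| "ad1 G11 = G9"
| "ad1 G12 = G13"
| "ad1 G13 = G14"
| "ad1 G14 = G12"
| "ad1 G15 = G16"
| "ad1 G16 = G17"
| "ad1 G17 = G15"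
| "ad1 G18 = G19"
| "ad1 G19 = G20"
| "ad1 G20 = G18"
| "ad1 G21 = G22"
| "ad1 G22 = G23"
| "ad1 G23 = G21"
| "ad1 G24 = G25"
| "ad1 G25 = G26"
| "ad1 G26 = G24"

primrec ad2 :: "gf \<Rightarrow> gf" where
  "ad2 G0 = G2"
| "ad2 G1 = G0"
| "ad2 G2 = G1"
| "ad2 G3 = G5"
| "ad2 G4 = G3"
| "ad2 G5 = G4"
| "ad2 G6 = G8"
| "ad2 G7 = G6"
| "ad2 G8 = G7"
| "ad2 G9 = G11"
| "ad2 G10 = G9"
| "ad2 G11 = G10"
| "ad2 G12 = G14"
| "ad2 G13 = G12"
| "ad2 G14 = G13"
| "ad2 G15 = G17"
| "ad2 G16 = G15"
| "ad2 G17 = G16"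
| "ad2 G18 = G20"
| "ad2 G19 = G18"
| "ad2 G20 = G19"
| "ad2 G21 = G23"
| "ad2 G22 = G21"
| "ad2 G23 = G22"
| "ad2 G24 = G26"
| "ad2 G25 = G24"
| "ad2 G26 = G25"

primrec ad3 :: "gf \<Rightarrow> gf" where
  "ad3 G0 = G3"
| "ad3 G1 = G4"
| "ad3 G2 = G5"
| "ad3 G3 = G6"
| "ad3 G4 = G7"
| "ad3 G5 = G8"
| "ad3 G6 = G0"
| "ad3 G7 = G1"
| "ad3 G8 = G2"
| "ad3 G9 = G12"
| "ad3 G10 = G13"
| "ad3 G11 = G14"
| "ad3 G12 = G15"
| "ad3 G13 = G16"
| "ad3 G14 = G17"
| "ad3 G15 = G9"
| "ad3 G16 = G10"
| "ad3 G17 = G11"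
| "ad3 G18 = G21"
| "ad3 G19 = G22"
| "ad3 G20 = G23"
| "ad3 G21 = G24"
| "ad3 G22 = G25"
| "ad3 G23 = G26"
| "ad3 G24 = G18"
| "ad3 G25 = G19"
| "ad3 G26 = G20"

primrec ad4 :: "gf \<Rightarrow> gf" where
  "ad4 G0 = G4"
| "ad4 G1 = G5"
| "ad4 G2 = G3"
| "ad4 G3 = G7"
| "ad4 G4 = G8"
| "ad4 G5 = G6"
| "ad4 G6 = G1"
| "ad4 G7 = G2"
| "ad4 G8 = G0"
| "ad4 G9 = G13"
| "ad4 G10 = G14"
| "ad4 G11 = G12"
| "ad4 G12 = G16"
| "ad4 G13 = G17"
| "ad4 G14 = G15"
| "ad4 G15 = G10"
| "ad4 G16 = G11"
| "ad4 G17 = G9"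
| "ad4 G18 = G22"
| "ad4 G19 = G23"
| "ad4 G20 = G21"
| "ad4 G21 = G25"
| "ad4 G22 = G26"
| "ad4 G23 = G24"
| "ad4 G24 = G19"
| "ad4 G25 = G20"
| "ad4 G26 = G18"

primrec ad5 :: "gf \<Rightarrow> gf" where
  "ad5 G0 = G5"
| "ad5 G1 = G3"
| "ad5 G2 = G4"
| "ad5 G3 = G8"
| "ad5 G4 = G6"
| "ad5 G5 = G7"
| "ad5 G6 = G2"
| "ad5 G7 = G0"
| "ad5 G8 = G1"
| "ad5 G9 = G14"
| "ad5 G10 = G12"
| "ad5 G11 = G13"
| "ad5 G12 = G17"
| "ad5 G13 = G15"
| "ad5 G14 = G16"
| "ad5 G15 = G11"
| "ad5 G16 = G9"
| "ad5 G17 = G10"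
| "ad5 G18 = G23"
| "ad5 G19 = G21"
| "ad5 G20 = G22"
| "ad5 G21 = G26"
| "ad5 G22 = G24"
| "ad5 G23 = G25"
| "ad5 G24 = G20"
| "ad5 G25 = G18"
| "ad5 G26 = G19"

primrec ad6 :: "gf \<Rightarrow> gf" where
  "ad6 G0 = G6"
| "ad6 G1 = G7"
| "ad6 G2 = G8"
| "ad6 G3 = G0"
| "ad6 G4 = G1"
| "ad6 G5 = G2"
| "ad6 G6 = G3"
| "ad6 G7 = G4"
| "ad6 G8 = G5"
| "ad6 G9 = G15"
| "ad6 G10 = G16"
| "ad6 G11 = G17"
| "ad6 G12 = G9"
| "ad6 G13 = G10"
| "ad6 G14 = G11"
| "ad6 G15 = G12"
| "ad6 G16 = G13"
| "ad6 G17 = G14"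
| "ad6 G18 = G24"
| "ad6 G19 = G25"
| "ad6 G20 = G26"
| "ad6 G21 = G18"
| "ad6 G22 = G19"
| "ad6 G23 = G20"
| "ad6 G24 = G21"
| "ad6 G25 = G22"
| "ad6 G26 = G23"

primrec ad7 :: "gf \<Rightarrow> gf" where
  "ad7 G0 = G7"
| "ad7 G1 = G8"
| "ad7 G2 = G6"
| "ad7 G3 = G1"
| "ad7 G4 = G2"
| "ad7 G5 = G0"
| "ad7 G6 = G4"
| "ad7 G7 = G5"
| "ad7 G8 = G3"
| "ad7 G9 = G16"
| "ad7 G10 = G17"
| "ad7 G11 = G15"
| "ad7 G12 = G10"
| "ad7 G13 = G11"
| "ad7 G14 = G9"
| "ad7 G15 = G13"
| "ad7 G16 = G14"
| "ad7 G17 = G12"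
| "ad7 G18 = G25"
| "ad7 G19 = G26"
| "ad7 G20 = G24"
| "ad7 G21 = G19"
| "ad7 G22 = G20"
| "ad7 G23 = G18"
| "ad7 G24 = G22"
| "ad7 G25 = G23"
| "ad7 G26 = G21"

primrec ad8 :: "gf \<Rightarrow> gf" where
  "ad8 G0 = G8"
| "ad8 G1 = G6"
| "ad8 G2 = G7"
| "ad8 G3 = G2"
| "ad8 G4 = G0"
| "ad8 G5 = G1"
| "ad8 G6 = G5"
| "ad8 G7 = G3"
| "ad8 G8 = G4"
| "ad8 G9 = G17"
| "ad8 G10 = G15"
| "ad8 G11 = G16"
| "ad8 G12 = G11"
| "ad8 G13 = G9"
| "ad8 G14 = G10"
| "ad8 G15 = G14"
| "ad8 G16 = G12"
| "ad8 G17 = G13"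
| "ad8 G18 = G26"
| "ad8 G19 = G24"
| "ad8 G20 = G25"
| "ad8 G21 = G20"
| "ad8 G22 = G18"
| "ad8 G23 = G19"
| "ad8 G24 = G23"
| "ad8 G25 = G21"
| "ad8 G26 = G22"

primrec ad9 :: "gf \<Rightarrow> gf" where
  "ad9 G0 = G9"
| "ad9 G1 = G10"
| "ad9 G2 = G11"
| "ad9 G3 = G12"
| "ad9 G4 = G13"
| "ad9 G5 = G14"
| "ad9 G6 = G15"
| "ad9 G7 = G16"
| "ad9 G8 = G17"
| "ad9 G9 = G18"
| "ad9 G10 = G19"
| "ad9 G11 = G20"
| "ad9 G12 = G21"
| "ad9 G13 = G22"
| "ad9 G14 = G23"
| "ad9 G15 = G24"
| "ad9 G16 = G25"
| "ad9 G17 = G26"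
| "ad9 G18 = G0"
| "ad9 G19 = G1"
| "ad9 G20 = G2"
| "ad9 G21 = G3"
| "ad9 G22 = G4"
| "ad9 G23 = G5"
| "ad9 G24 = G6"
| "ad9 G25 = G7"
| "ad9 G26 = G8"

primrec ad10 :: "gf \<Rightarrow> gf" where
  "ad10 G0 = G10"
| "ad10 G1 = G11"
| "ad10 G2 = G9"
| "ad10 G3 = G13"
| "ad10 G4 = G14"
| "ad10 G5 = G12"
| "ad10 G6 = G16"
| "ad10 G7 = G17"
| "ad10 G8 = G15"
| "ad10 G9 = G19"
| "ad10 G10 = G20"
| "ad10 G11 = G18"
| "ad10 G12 = G22"
| "ad10 G13 = G23"
| "ad10 G14 = G21"
| "ad10 G15 = G25"
| "ad10 G16 = G26"
| "ad10 G17 = G24"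
| "ad10 G18 = G1"
| "ad10 G19 = G2"
| "ad10 G20 = G0"
| "ad10 G21 = G4"
| "ad10 G22 = G5"
| "ad10 G23 = G3"
| "ad10 G24 = G7"
| "ad10 G25 = G8"
| "ad10 G26 = G6"

primrec ad11 :: "gf \<Rightarrow> gf" where
  "ad11 G0 = G11"
| "ad11 G1 = G9"
| "ad11 G2 = G10"
| "ad11 G3 = G14"
| "ad11 G4 = G12"
| "ad11 G5 = G13"
| "ad11 G6 = G17"
| "ad11 G7 = G15"
| "ad11 G8 = G16"
| "ad11 G9 = G20"
| "ad11 G10 = G18"
| "ad11 G11 = G19"
| "ad11 G12 = G23"
| "ad11 G13 = G21"
| "ad11 G14 = G22"
| "ad11 G15 = G26"
| "ad11 G16 = G24"
| "ad11 G17 = G25"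
| "ad11 G18 = G2"
| "ad11 G19 = G0"
| "ad11 G20 = G1"
| "ad11 G21 = G5"
| "ad11 G22 = G3"
| "ad11 G23 = G4"
| "ad11 G24 = G8"
| "ad11 G25 = G6"
| "ad11 G26 = G7"

primrec ad12 :: "gf \<Rightarrow> gf" where
  "ad12 G0 = G12"
| "ad12 G1 = G13"
| "ad12 G2 = G14"
| "ad12 G3 = G15"
| "ad12 G4 = G16"
| "ad12 G5 = G17"
| "ad12 G6 = G9"
| "ad12 G7 = G10"
| "ad12 G8 = G11"
| "ad12 G9 = G21"
| "ad12 G10 = G22"
| "ad12 G11 = G23"
| "ad12 G12 = G24"
| "ad12 G13 = G25"
| "ad12 G14 = G26"
| "ad12 G15 = G18"
| "ad12 G16 = G19"
| "ad12 G17 = G20"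
| "ad12 G18 = G3"
| "ad12 G19 = G4"
| "ad12 G20 = G5"
| "ad12 G21 = G6"
| "ad12 G22 = G7"
| "ad12 G23 = G8"
| "ad12 G24 = G0"
| "ad12 G25 = G1"
| "ad12 G26 = G2"

primrec ad13 :: "gf \<Rightarrow> gf" where
  "ad13 G0 = G13"
| "ad13 G1 = G14"
| "ad13 G2 = G12"
| "ad13 G3 = G16"
| "ad13 G4 = G17"
| "ad13 G5 = G15"
| "ad13 G6 = G10"
| "ad13 G7 = G11"
| "ad13 G8 = G9"
| "ad13 G9 = G22"
| "ad13 G10 = G23"
| "ad13 G11 = G21"
| "ad13 G12 = G25"
| "ad13 G13 = G26"
| "ad13 G14 = G24"
| "ad13 G15 = G19"
| "ad13 G16 = G20"
| "ad13 G17 = G18"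
| "ad13 G18 = G4"
| "ad13 G19 = G5"
| "ad13 G20 = G3"
| "ad13 G21 = G7"
| "ad13 G22 = G8"
| "ad13 G23 = G6"
| "ad13 G24 = G1"
| "ad13 G25 = G2"
| "ad13 G26 = G0"

primrec ad14 :: "gf \<Rightarrow> gf" where
  "ad14 G0 = G14"
| "ad14 G1 = G12"
| "ad14 G2 = G13"
| "ad14 G3 = G17"
| "ad14 G4 = G15"
| "ad14 G5 = G16"
| "ad14 G6 = G11"
| "ad14 G7 = G9"
| "ad14 G8 = G10"
| "ad14 G9 = G23"
| "ad14 G10 = G21"
| "ad14 G11 = G22"
| "ad14 G12 = G26"
| "ad14 G13 = G24"
| "ad14 G14 = G25"
| "ad14 G15 = G20"
| "ad14 G16 = G18"
| "ad14 G17 = G19"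
| "ad14 G18 = G5"
| "ad14 G19 = G3"
| "ad14 G20 = G4"
| "ad14 G21 = G8"
| "ad14 G22 = G6"
| "ad14 G23 = G7"
| "ad14 G24 = G2"
| "ad14 G25 = G0"
| "ad14 G26 = G1"

primrec ad15 :: "gf \<Rightarrow> gf" where
  "ad15 G0 = G15"
| "ad15 G1 = G16"
| "ad15 G2 = G17"
| "ad15 G3 = G9"
| "ad15 G4 = G10"
| "ad15 G5 = G11"
| "ad15 G6 = G12"
| "ad15 G7 = G13"
| "ad15 G8 = G14"
| "ad15 G9 = G24"
| "ad15 G10 = G25"
| "ad15 G11 = G26"
| "ad15 G12 = G18"
| "ad15 G13 = G19"
| "ad15 G14 = G20"
| "ad15 G15 = G21"
| "ad15 G16 = G22"
| "ad15 G17 = G23"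
| "ad15 G18 = G6"
| "ad15 G19 = G7"
| "ad15 G20 = G8"
| "ad15 G21 = G0"
| "ad15 G22 = G1"
| "ad15 G23 = G2"
| "ad15 G24 = G3"
| "ad15 G25 = G4"
| "ad15 G26 = G5"

primrec ad16 :: "gf \<Rightarrow> gf" where
  "ad16 G0 = G16"
| "ad16 G1 = G17"
| "ad16 G2 = G15"
| "ad16 G3 = G10"
| "ad16 G4 = G11"
| "ad16 G5 = G9"
| "ad16 G6 = G13"
| "ad16 G7 = G14"
| "ad16 G8 = G12"
| "ad16 G9 = G25"
| "ad16 G10 = G26"
| "ad16 G11 = G24"
| "ad16 G12 = G19"
| "ad16 G13 = G20"
| "ad16 G14 = G18"
| "ad16 G15 = G22"
| "ad16 G16 = G23"
| "ad16 G17 = G21"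
| "ad16 G18 = G7"
| "ad16 G19 = G8"
| "ad16 G20 = G6"
| "ad16 G21 = G1"
| "ad16 G22 = G2"
| "ad16 G23 = G0"
| "ad16 G24 = G4"
| "ad16 G25 = G5"
| "ad16 G26 = G3"

primrec ad17 :: "gf \<Rightarrow> gf" where
  "ad17 G0 = G17"
| "ad17 G1 = G15"
| "ad17 G2 = G16"
| "ad17 G3 = G11"
| "ad17 G4 = G9"
| "ad17 G5 = G10"
| "ad17 G6 = G14"
| "ad17 G7 = G12"
| "ad17 G8 = G13"
| "ad17 G9 = G26"
| "ad17 G10 = G24"
| "ad17 G11 = G25"
| "ad17 G12 = G20"
| "ad17 G13 = G18"
| "ad17 G14 = G19"
| "ad17 G15 = G23"
| "ad17 G16 = G21"
| "ad17 G17 = G22"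
| "ad17 G18 = G8"
| "ad17 G19 = G6"
| "ad17 G20 = G7"
| "ad17 G21 = G2"
| "ad17 G22 = G0"
| "ad17 G23 = G1"
| "ad17 G24 = G5"
| "ad17 G25 = G3"
| "ad17 G26 = G4"

primrec ad18 :: "gf \<Rightarrow> gf" where
  "ad18 G0 = G18"
| "ad18 G1 = G19"
| "ad18 G2 = G20"
| "ad18 G3 = G21"
| "ad18 G4 = G22"
| "ad18 G5 = G23"
| "ad18 G6 = G24"
| "ad18 G7 = G25"
| "ad18 G8 = G26"
| "ad18 G9 = G0"
| "ad18 G10 = G1"
| "ad18 G11 = G2"
| "ad18 G12 = G3"
| "ad18 G13 = G4"
| "ad18 G14 = G5"
| "ad18 G15 = G6"
| "ad18 G16 = G7"
| "ad18 G17 = G8"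
| "ad18 G18 = G9"
| "ad18 G19 = G10"
| "ad18 G20 = G11"
| "ad18 G21 = G12"
| "ad18 G22 = G13"
| "ad18 G23 = G14"
| "ad18 G24 = G15"
| "ad18 G25 = G16"
| "ad18 G26 = G17"

primrec ad19 :: "gf \<Rightarrow> gf" where
  "ad19 G0 = G19"
| "ad19 G1 = G20"
| "ad19 G2 = G18"
| "ad19 G3 = G22"
| "ad19 G4 = G23"
| "ad19 G5 = G21"
| "ad19 G6 = G25"
| "ad19 G7 = G26"
| "ad19 G8 = G24"
| "ad19 G9 = G1"
| "ad19 G10 = G2"
| "ad19 G11 = G0"
| "ad19 G12 = G4"
| "ad19 G13 = G5"
| "ad19 G14 = G3"
| "ad19 G15 = G7"
| "ad19 G16 = G8"
| "ad19 G17 = G6"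
| "ad19 G18 = G10"
| "ad19 G19 = G11"
| "ad19 G20 = G9"
| "ad19 G21 = G13"
| "ad19 G22 = G14"
| "ad19 G23 = G12"
| "ad19 G24 = G16"
| "ad19 G25 = G17"
| "ad19 G26 = G15"

primrec ad20 :: "gf \<Rightarrow> gf" where
  "ad20 G0 = G20"
| "ad20 G1 = G18"
| "ad20 G2 = G19"
| "ad20 G3 = G23"
| "ad20 G4 = G21"
| "ad20 G5 = G22"
| "ad20 G6 = G26"
| "ad20 G7 = G24"
| "ad20 G8 = G25"
| "ad20 G9 = G2"
| "ad20 G10 = G0"
| "ad20 G11 = G1"
| "ad20 G12 = G5"
| "ad20 G13 = G3"
| "ad20 G14 = G4"
| "ad20 G15 = G8"
| "ad20 G16 = G6"
| "ad20 G17 = G7"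
| "ad20 G18 = G11"
| "ad20 G19 = G9"
| "ad20 G20 = G10"
| "ad20 G21 = G14"
| "ad20 G22 = G12"
| "ad20 G23 = G13"
| "ad20 G24 = G17"
| "ad20 G25 = G15"
| "ad20 G26 = G16"

primrec ad21 :: "gf \<Rightarrow> gf" where
  "ad21 G0 = G21"
| "ad21 G1 = G22"
| "ad21 G2 = G23"
| "ad21 G3 = G24"
| "ad21 G4 = G25"
| "ad21 G5 = G26"
| "ad21 G6 = G18"
| "ad21 G7 = G19"
| "ad21 G8 = G20"
| "ad21 G9 = G3"
| "ad21 G10 = G4"
| "ad21 G11 = G5"
| "ad21 G12 = G6"
| "ad21 G13 = G7"
| "ad21 G14 = G8"
| "ad21 G15 = G0"
| "ad21 G16 = G1"
| "ad21 G17 = G2"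
| "ad21 G18 = G12"
| "ad21 G19 = G13"
| "ad21 G20 = G14"
| "ad21 G21 = G15"
| "ad21 G22 = G16"
| "ad21 G23 = G17"
| "ad21 G24 = G9"
| "ad21 G25 = G10"
| "ad21 G26 = G11"

primrec ad22 :: "gf \<Rightarrow> gf" where
  "ad22 G0 = G22"
| "ad22 G1 = G23"
| "ad22 G2 = G21"
| "ad22 G3 = G25"
| "ad22 G4 = G26"
| "ad22 G5 = G24"
| "ad22 G6 = G19"
| "ad22 G7 = G20"
| "ad22 G8 = G18"
| "ad22 G9 = G4"
| "ad22 G10 = G5"
| "ad22 G11 = G3"
| "ad22 G12 = G7"
| "ad22 G13 = G8"
| "ad22 G14 = G6"
| "ad22 G15 = G1"
| "ad22 G16 = G2"
| "ad22 G17 = G0"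
| "ad22 G18 = G13"
| "ad22 G19 = G14"
| "ad22 G20 = G12"
| "ad22 G21 = G16"
| "ad22 G22 = G17"
| "ad22 G23 = G15"
| "ad22 G24 = G10"
| "ad22 G25 = G11"
| "ad22 G26 = G9"

primrec ad23 :: "gf \<Rightarrow> gf" where
  "ad23 G0 = G23"
| "ad23 G1 = G21"
| "ad23 G2 = G22"
| "ad23 G3 = G26"
| "ad23 G4 = G24"
| "ad23 G5 = G25"
| "ad23 G6 = G20"
| "ad23 G7 = G18"
| "ad23 G8 = G19"
| "ad23 G9 = G5"
| "ad23 G10 = G3"
| "ad23 G11 = G4"
| "ad23 G12 = G8"
| "ad23 G13 = G6"
| "ad23 G14 = G7"
| "ad23 G15 = G2"
| "ad23 G16 = G0"
| "ad23 G17 = G1"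
| "ad23 G18 = G14"
| "ad23 G19 = G12"
| "ad23 G20 = G13"
| "ad23 G21 = G17"
| "ad23 G22 = G15"
| "ad23 G23 = G16"
| "ad23 G24 = G11"
| "ad23 G25 = G9"
| "ad23 G26 = G10"

primrec ad24 :: "gf \<Rightarrow> gf" where
  "ad24 G0 = G24"
| "ad24 G1 = G25"
| "ad24 G2 = G26"
| "ad24 G3 = G18"
| "ad24 G4 = G19"
| "ad24 G5 = G20"
| "ad24 G6 = G21"
| "ad24 G7 = G22"
| "ad24 G8 = G23"
| "ad24 G9 = G6"
| "ad24 G10 = G7"
| "ad24 G11 = G8"
| "ad24 G12 = G0"
| "ad24 G13 = G1"
| "ad24 G14 = G2"
| "ad24 G15 = G3"
| "ad24 G16 = G4"
| "ad24 G17 = G5"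
| "ad24 G18 = G15"
| "ad24 G19 = G16"
| "ad24 G20 = G17"
| "ad24 G21 = G9"
| "ad24 G22 = G10"
| "ad24 G23 = G11"
| "ad24 G24 = G12"
| "ad24 G25 = G13"
| "ad24 G26 = G14"

primrec ad25 :: "gf \<Rightarrow> gf" where
  "ad25 G0 = G25"
| "ad25 G1 = G26"
| "ad25 G2 = G24"
| "ad25 G3 = G19"
| "ad25 G4 = G20"
| "ad25 G5 = G18"
| "ad25 G6 = G22"
| "ad25 G7 = G23"
| "ad25 G8 = G21"
| "ad25 G9 = G7"
| "ad25 G10 = G8"
| "ad25 G11 = G6"
| "ad25 G12 = G1"
| "ad25 G13 = G2"
| "ad25 G14 = G0"
| "ad25 G15 = G4"
| "ad25 G16 = G5"
| "ad25 G17 = G3"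
| "ad25 G18 = G16"
| "ad25 G19 = G17"
| "ad25 G20 = G15"
| "ad25 G21 = G10"
| "ad25 G22 = G11"
| "ad25 G23 = G9"
| "ad25 G24 = G13"
| "ad25 G25 = G14"
| "ad25 G26 = G12"

primrec ad26 :: "gf \<Rightarrow> gf" where
  "ad26 G0 = G26"
| "ad26 G1 = G24"
| "ad26 G2 = G25"
| "ad26 G3 = G20"
| "ad26 G4 = G18"
| "ad26 G5 = G19"
| "ad26 G6 = G23"
| "ad26 G7 = G21"
| "ad26 G8 = G22"
| "ad26 G9 = G8"
| "ad26 G10 = G6"
| "ad26 G11 = G7"
| "ad26 G12 = G2"
| "ad26 G13 = G0"
| "ad26 G14 = G1"
| "ad26 G15 = G5"
| "ad26 G16 = G3"
| "ad26 G17 = G4"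
| "ad26 G18 = G17"
| "ad26 G19 = G15"
| "ad26 G20 = G16"
| "ad26 G21 = G11"
| "ad26 G22 = G9"
| "ad26 G23 = G10"
| "ad26 G24 = G14"
| "ad26 G25 = G12"
| "ad26 G26 = G13"

primrec adg :: "gf \<Rightarrow> gf \<Rightarrow> gf" where
  "adg G0 = ad0"
| "adg G1 = ad1"
| "adg G2 = ad2"
| "adg G3 = ad3"
| "adg G4 = ad4"
| "adg G5 = ad5"
| "adg G6 = ad6"
| "adg G7 = ad7"
| "adg G8 = ad8"
| "adg G9 = ad9"
| "adg G10 = ad10"
| "adg G11 = ad11"
| "adg G12 = ad12"
| "adg G13 = ad13"
| "adg G14 = ad14"
| "adg G15 = ad15"
| "adg G16 = ad16"
| "adg G17 = ad17"
| "adg G18 = ad18"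
| "adg G19 = ad19"
| "adg G20 = ad20"
| "adg G21 = ad21"
| "adg G22 = ad22"
| "adg G23 = ad23"
| "adg G24 = ad24"
| "adg G25 = ad25"
| "adg G26 = ad26"

primrec mu0 :: "gf \<Rightarrow> gf" where
  "mu0 G0 = G0"
| "mu0 G1 = G0"
| "mu0 G2 = G0"
| "mu0 G3 = G0"
| "mu0 G4 = G0"
| "mu0 G5 = G0"
| "mu0 G6 = G0"
| "mu0 G7 = G0"
| "mu0 G8 = G0"
| "mu0 G9 = G0"
| "mu0 G10 = G0"
| "mu0 G11 = G0"
| "mu0 G12 = G0"
| "mu0 G13 = G0"
| "mu0 G14 = G0"
| "mu0 G15 = G0"
| "mu0 G16 = G0"
| "mu0 G17 = G0"
| "mu0 G18 = G0"
| "mu0 G19 = G0"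
| "mu0 G20 = G0"
| "mu0 G21 = G0"
| "mu0 G22 = G0"
| "mu0 G23 = G0"
| "mu0 G24 = G0"
| "mu0 G25 = G0"
| "mu0 G26 = G0"

primrec mu1 :: "gf \<Rightarrow> gf" where
  "mu1 G0 = G0"
| "mu1 G1 = G1"
| "mu1 G2 = G2"
| "mu1 G3 = G3"
| "mu1 G4 = G4"
| "mu1 G5 = G5"
| "mu1 G6 = G6"
| "mu1 G7 = G7"
| "mu1 G8 = G8"
| "mu1 G9 = G9"
| "mu1 G10 = G10"
| "mu1 G11 = G11"
| "mu1 G12 = G12"
| "mu1 G13 = G13"
| "mu1 G14 = G14"
| "mu1 G15 = G15"
| "mu1 G16 = G16"
| "mu1 G17 = G17"
| "mu1 G18 = G18"
| "mu1 G19 = G19"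
| "mu1 G20 = G20"
| "mu1 G21 = G21"
| "mu1 G22 = G22"
| "mu1 G23 = G23"
| "mu1 G24 = G24"
| "mu1 G25 = G25"
| "mu1 G26 = G26"

primrec mu2 :: "gf \<Rightarrow> gf" where
  "mu2 G0 = G0"
| "mu2 G1 = G2"
| "mu2 G2 = G1"
| "mu2 G3 = G6"
| "mu2 G4 = G8"
| "mu2 G5 = G7"
| "mu2 G6 = G3"
| "mu2 G7 = G5"
| "mu2 G8 = G4"
| "mu2 G9 = G18"
| "mu2 G10 = G20"
| "mu2 G11 = G19"
| "mu2 G12 = G24"
| "mu2 G13 = G26"
| "mu2 G14 = G25"
| "mu2 G15 = G21"
| "mu2 G16 = G23"
| "mu2 G17 = G22"
| "mu2 G18 = G9"
| "mu2 G19 = G11"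
| "mu2 G20 = G10"
| "mu2 G21 = G15"
| "mu2 G22 = G17"
| "mu2 G23 = G16"
| "mu2 G24 = G12"
| "mu2 G25 = G14"
| "mu2 G26 = G13"

primrec mu3 :: "gf \<Rightarrow> gf" where
  "mu3 G0 = G0"
| "mu3 G1 = G3"
| "mu3 G2 = G6"
| "mu3 G3 = G9"
| "mu3 G4 = G12"
| "mu3 G5 = G15"
| "mu3 G6 = G18"
| "mu3 G7 = G21"
| "mu3 G8 = G24"
| "mu3 G9 = G4"
| "mu3 G10 = G7"
| "mu3 G11 = G1"
| "mu3 G12 = G13"
| "mu3 G13 = G16"
| "mu3 G14 = G10"
| "mu3 G15 = G22"
| "mu3 G16 = G25"
| "mu3 G17 = G19"
| "mu3 G18 = G8"
| "mu3 G19 = G2"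
| "mu3 G20 = G5"
| "mu3 G21 = G17"
| "mu3 G22 = G11"
| "mu3 G23 = G14"
| "mu3 G24 = G26"
| "mu3 G25 = G20"
| "mu3 G26 = G23"

primrec mu4 :: "gf \<Rightarrow> gf" where
  "mu4 G0 = G0"
| "mu4 G1 = G4"
| "mu4 G2 = G8"
| "mu4 G3 = G12"
| "mu4 G4 = G16"
| "mu4 G5 = G11"
| "mu4 G6 = G24"
| "mu4 G7 = G19"
| "mu4 G8 = G23"
| "mu4 G9 = G13"
| "mu4 G10 = G17"
| "mu4 G11 = G9"
| "mu4 G12 = G25"
| "mu4 G13 = G20"
| "mu4 G14 = G21"
| "mu4 G15 = G1"
| "mu4 G16 = G5"
| "mu4 G17 = G6"
| "mu4 G18 = G26"
| "mu4 G19 = G18"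
| "mu4 G20 = G22"
| "mu4 G21 = G2"
| "mu4 G22 = G3"
| "mu4 G23 = G7"
| "mu4 G24 = G14"
| "mu4 G25 = G15"
| "mu4 G26 = G10"

primrec mu5 :: "gf \<Rightarrow> gf" where
  "mu5 G0 = G0"
| "mu5 G1 = G5"
| "mu5 G2 = G7"
| "mu5 G3 = G15"
| "mu5 G4 = G11"
| "mu5 G5 = G13"
| "mu5 G6 = G21"
| "mu5 G7 = G26"
| "mu5 G8 = G19"
| "mu5 G9 = G22"
| "mu5 G10 = G24"
| "mu5 G11 = G20"
| "mu5 G12 = G1"
| "mu5 G13 = G3"
| "mu5 G14 = G8"
| "mu5 G15 = G16"
| "mu5 G16 = G9"
| "mu5 G17 = G14"
| "mu5 G18 = G17"
| "mu5 G19 = G10"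
| "mu5 G20 = G12"
| "mu5 G21 = G23"
| "mu5 G22 = G25"
| "mu5 G23 = G18"
| "mu5 G24 = G2"
| "mu5 G25 = G4"
| "mu5 G26 = G6"

primrec mu6 :: "gf \<Rightarrow> gf" where
  "mu6 G0 = G0"
| "mu6 G1 = G6"
| "mu6 G2 = G3"
| "mu6 G3 = G18"
| "mu6 G4 = G24"
| "mu6 G5 = G21"
| "mu6 G6 = G9"
| "mu6 G7 = G15"
| "mu6 G8 = G12"
| "mu6 G9 = G8"
| "mu6 G10 = G5"
| "mu6 G11 = G2"
| "mu6 G12 = G26"
| "mu6 G13 = G23"
| "mu6 G14 = G20"
| "mu6 G15 = G17"
| "mu6 G16 = G14"
| "mu6 G17 = G11"
| "mu6 G18 = G4"
| "mu6 G19 = G1"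
| "mu6 G20 = G7"
| "mu6 G21 = G22"
| "mu6 G22 = G19"
| "mu6 G23 = G25"
| "mu6 G24 = G13"
| "mu6 G25 = G10"
| "mu6 G26 = G16"

primrec mu7 :: "gf \<Rightarrow> gf" where
  "mu7 G0 = G0"
| "mu7 G1 = G7"
| "mu7 G2 = G5"
| "mu7 G3 = G21"
| "mu7 G4 = G19"
| "mu7 G5 = G26"
| "mu7 G6 = G15"
| "mu7 G7 = G13"
| "mu7 G8 = G11"
| "mu7 G9 = G17"
| "mu7 G10 = G12"
| "mu7 G11 = G10"
| "mu7 G12 = G2"
| "mu7 G13 = G6"
| "mu7 G14 = G4"
| "mu7 G15 = G23"
| "mu7 G16 = G18"
| "mu7 G17 = G25"
| "mu7 G18 = G22"
| "mu7 G19 = G20"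
| "mu7 G20 = G24"
| "mu7 G21 = G16"
| "mu7 G22 = G14"
| "mu7 G23 = G9"
| "mu7 G24 = G1"
| "mu7 G25 = G8"
| "mu7 G26 = G3"

primrec mu8 :: "gf \<Rightarrow> gf" where
  "mu8 G0 = G0"
| "mu8 G1 = G8"
| "mu8 G2 = G4"
| "mu8 G3 = G24"
| "mu8 G4 = G23"
| "mu8 G5 = G19"
| "mu8 G6 = G12"
| "mu8 G7 = G11"
| "mu8 G8 = G16"
| "mu8 G9 = G26"
| "mu8 G10 = G22"
| "mu8 G11 = G18"
| "mu8 G12 = G14"
| "mu8 G13 = G10"
| "mu8 G14 = G15"
| "mu8 G15 = G2"
| "mu8 G16 = G7"
| "mu8 G17 = G3"
| "mu8 G18 = G13"
| "mu8 G19 = G9"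
| "mu8 G20 = G17"
| "mu8 G21 = G1"
| "mu8 G22 = G6"
| "mu8 G23 = G5"
| "mu8 G24 = G25"
| "mu8 G25 = G21"
| "mu8 G26 = G20"

primrec mu9 :: "gf \<Rightarrow> gf" where
  "mu9 G0 = G0"
| "mu9 G1 = G9"
| "mu9 G2 = G18"
| "mu9 G3 = G4"
| "mu9 G4 = G13"
| "mu9 G5 = G22"
| "mu9 G6 = G8"
| "mu9 G7 = G17"
| "mu9 G8 = G26"
| "mu9 G9 = G12"
| "mu9 G10 = G21"
| "mu9 G11 = G3"
| "mu9 G12 = G16"
| "mu9 G13 = G25"
| "mu9 G14 = G7"
| "mu9 G15 = G11"
| "mu9 G16 = G20"
| "mu9 G17 = G2"
| "mu9 G18 = G24"
| "mu9 G19 = G6"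
| "mu9 G20 = G15"
| "mu9 G21 = G19"
| "mu9 G22 = G1"
| "mu9 G23 = G10"
| "mu9 G24 = G23"
| "mu9 G25 = G5"
| "mu9 G26 = G14"

primrec mu10 :: "gf \<Rightarrow> gf" where
  "mu10 G0 = G0"
| "mu10 G1 = G10"
| "mu10 G2 = G20"
| "mu10 G3 = G7"
| "mu10 G4 = G17"
| "mu10 G5 = G24"
| "mu10 G6 = G5"
| "mu10 G7 = G12"
| "mu10 G8 = G22"
| "mu10 G9 = G21"
| "mu10 G10 = G4"
| "mu10 G11 = G14"
| "mu10 G12 = G19"
| "mu10 G13 = G2"
| "mu10 G14 = G9"
| "mu10 G15 = G26"
| "mu10 G16 = G6"
| "mu10 G17 = G16"
| "mu10 G18 = G15"
| "mu10 G19 = G25"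
| "mu10 G20 = G8"
| "mu10 G21 = G13"
| "mu10 G22 = G23"
| "mu10 G23 = G3"
| "mu10 G24 = G11"
| "mu10 G25 = G18"
| "mu10 G26 = G1"

primrec mu11 :: "gf \<Rightarrow> gf" where
  "mu11 G0 = G0"
| "mu11 G1 = G11"
| "mu11 G2 = G19"
| "mu11 G3 = G1"
| "mu11 G4 = G9"
| "mu11 G5 = G20"
| "mu11 G6 = G2"
| "mu11 G7 = G10"
| "mu11 G8 = G18"
| "mu11 G9 = G3"
| "mu11 G10 = G14"
| "mu11 G11 = G22"
| "mu11 G12 = G4"
| "mu11 G13 = G12"
| "mu11 G14 = G23"
| "mu11 G15 = G5"
| "mu11 G16 = G13"
| "mu11 G17 = G21"
| "mu11 G18 = G6"
| "mu11 G19 = G17"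
| "mu11 G20 = G25"
| "mu11 G21 = G7"
| "mu11 G22 = G15"
| "mu11 G23 = G26"
| "mu11 G24 = G8"
| "mu11 G25 = G16"
| "mu11 G26 = G24"

primrec mu12 :: "gf \<Rightarrow> gf" where
  "mu12 G0 = G0"
| "mu12 G1 = G12"
| "mu12 G2 = G24"
| "mu12 G3 = G13"
| "mu12 G4 = G25"
| "mu12 G5 = G1"
| "mu12 G6 = G26"
| "mu12 G7 = G2"
| "mu12 G8 = G14"
| "mu12 G9 = G16"
| "mu12 G10 = G19"
| "mu12 G11 = G4"
| "mu12 G12 = G20"
| "mu12 G13 = G5"
| "mu12 G14 = G17"
| "mu12 G15 = G3"
| "mu12 G16 = G15"
| "mu12 G17 = G18"
| "mu12 G18 = G23"
| "mu12 G19 = G8"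
| "mu12 G20 = G11"
| "mu12 G21 = G6"
| "mu12 G22 = G9"
| "mu12 G23 = G21"
| "mu12 G24 = G10"
| "mu12 G25 = G22"
| "mu12 G26 = G7"

primrec mu13 :: "gf \<Rightarrow> gf" where
  "mu13 G0 = G0"
| "mu13 G1 = G13"
| "mu13 G2 = G26"
| "mu13 G3 = G16"
| "mu13 G4 = G20"
| "mu13 G5 = G3"
| "mu13 G6 = G23"
| "mu13 G7 = G6"
| "mu13 G8 = G10"
| "mu13 G9 = G25"
| "mu13 G10 = G2"
| "mu13 G11 = G12"
| "mu13 G12 = G5"
| "mu13 G13 = G15"
| "mu13 G14 = G19"
| "mu13 G15 = G9"
| "mu13 G16 = G22"
| "mu13 G17 = G8"
| "mu13 G18 = G14"
| "mu13 G19 = G24"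
| "mu13 G20 = G1"
| "mu13 G21 = G18"
| "mu13 G22 = G4"
| "mu13 G23 = G17"
| "mu13 G24 = G7"
| "mu13 G25 = G11"
| "mu13 G26 = G21"

primrec mu14 :: "gf \<Rightarrow> gf" where
  "mu14 G0 = G0"
| "mu14 G1 = G14"
| "mu14 G2 = G25"
| "mu14 G3 = G10"
| "mu14 G4 = G21"
| "mu14 G5 = G8"
| "mu14 G6 = G20"
| "mu14 G7 = G4"
| "mu14 G8 = G15"
| "mu14 G9 = G7"
| "mu14 G10 = G9"
| "mu14 G11 = G23"
| "mu14 G12 = G17"
| "mu14 G13 = G19"
| "mu14 G14 = G3"
| "mu14 G15 = G24"
| "mu14 G16 = G2"
| "mu14 G17 = G13"
| "mu14 G18 = G5"
| "mu14 G19 = G16"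
| "mu14 G20 = G18"
| "mu14 G21 = G12"
| "mu14 G22 = G26"
| "mu14 G23 = G1"
| "mu14 G24 = G22"
| "mu14 G25 = G6"
| "mu14 G26 = G11"

primrec mu15 :: "gf \<Rightarrow> gf" where
  "mu15 G0 = G0"
| "mu15 G1 = G15"
| "mu15 G2 = G21"
| "mu15 G3 = G22"
| "mu15 G4 = G1"
| "mu15 G5 = G16"
| "mu15 G6 = G17"
| "mu15 G7 = G23"
| "mu15 G8 = G2"
| "mu15 G9 = G11"
| "mu15 G10 = G26"
| "mu15 G11 = G5"
| "mu15 G12 = G3"
| "mu15 G13 = G9"
| "mu15 G14 = G24"
| "mu15 G15 = G25"
| "mu15 G16 = G4"
| "mu15 G17 = G10"
| "mu15 G18 = G19"
| "mu15 G19 = G7"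
| "mu15 G20 = G13"
| "mu15 G21 = G14"
| "mu15 G22 = G20"
| "mu15 G23 = G8"
| "mu15 G24 = G6"
| "mu15 G25 = G12"
| "mu15 G26 = G18"

primrec mu16 :: "gf \<Rightarrow> gf" where
  "mu16 G0 = G0"
| "mu16 G1 = G16"
| "mu16 G2 = G23"
| "mu16 G3 = G25"
| "mu16 G4 = G5"
| "mu16 G5 = G9"
| "mu16 G6 = G14"
| "mu16 G7 = G18"
| "mu16 G8 = G7"
| "mu16 G9 = G20"
| "mu16 G10 = G6"
| "mu16 G11 = G13"
| "mu16 G12 = G15"
| "mu16 G13 = G22"
| "mu16 G14 = G2"
| "mu16 G15 = G4"
| "mu16 G16 = G11"
| "mu16 G17 = G24"
| "mu16 G18 = G10"
| "mu16 G19 = G26"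
| "mu16 G20 = G3"
| "mu16 G21 = G8"
| "mu16 G22 = G12"
| "mu16 G23 = G19"
| "mu16 G24 = G21"
| "mu16 G25 = G1"
| "mu16 G26 = G17"

primrec mu17 :: "gf \<Rightarrow> gf" where
  "mu17 G0 = G0"
| "mu17 G1 = G17"
| "mu17 G2 = G22"
| "mu17 G3 = G19"
| "mu17 G4 = G6"
| "mu17 G5 = G14"
| "mu17 G6 = G11"
| "mu17 G7 = G25"
| "mu17 G8 = G3"
| "mu17 G9 = G2"
| "mu17 G10 = G16"
| "mu17 G11 = G21"
| "mu17 G12 = G18"
| "mu17 G13 = G8"
| "mu17 G14 = G13"
| "mu17 G15 = G10"
| "mu17 G16 = G24"
| "mu17 G17 = G5"
| "mu17 G18 = G1"
| "mu17 G19 = G15"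
| "mu17 G20 = G23"
| "mu17 G21 = G20"
| "mu17 G22 = G7"
| "mu17 G23 = G12"
| "mu17 G24 = G9"
| "mu17 G25 = G26"
| "mu17 G26 = G4"

primrec mu18 :: "gf \<Rightarrow> gf" where
  "mu18 G0 = G0"
| "mu18 G1 = G18"
| "mu18 G2 = G9"
| "mu18 G3 = G8"
| "mu18 G4 = G26"
| "mu18 G5 = G17"
| "mu18 G6 = G4"
| "mu18 G7 = G22"
| "mu18 G8 = G13"
| "mu18 G9 = G24"
| "mu18 G10 = G15"
| "mu18 G11 = G6"
| "mu18 G12 = G23"
| "mu18 G13 = G14"
| "mu18 G14 = G5"
| "mu18 G15 = G19"
| "mu18 G16 = G10"
| "mu18 G17 = G1"
| "mu18 G18 = G12"
| "mu18 G19 = G3"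
| "mu18 G20 = G21"
| "mu18 G21 = G11"
| "mu18 G22 = G2"
| "mu18 G23 = G20"
| "mu18 G24 = G16"
| "mu18 G25 = G7"
| "mu18 G26 = G25"

primrec mu19 :: "gf \<Rightarrow> gf" where
  "mu19 G0 = G0"
| "mu19 G1 = G19"
| "mu19 G2 = G11"
| "mu19 G3 = G2"
| "mu19 G4 = G18"
| "mu19 G5 = G10"
| "mu19 G6 = G1"
| "mu19 G7 = G20"
| "mu19 G8 = G9"
| "mu19 G9 = G6"
| "mu19 G10 = G25"
| "mu19 G11 = G17"
| "mu19 G12 = G8"
| "mu19 G13 = G24"
| "mu19 G14 = G16"
| "mu19 G15 = G7"
| "mu19 G16 = G26"
| "mu19 G17 = G15"
| "mu19 G18 = G3"
| "mu19 G19 = G22"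
| "mu19 G20 = G14"
| "mu19 G21 = G5"
| "mu19 G22 = G21"
| "mu19 G23 = G13"
| "mu19 G24 = G4"
| "mu19 G25 = G23"
| "mu19 G26 = G12"

primrec mu20 :: "gf \<Rightarrow> gf" where
  "mu20 G0 = G0"
| "mu20 G1 = G20"
| "mu20 G2 = G10"
| "mu20 G3 = G5"
| "mu20 G4 = G22"
| "mu20 G5 = G12"
| "mu20 G6 = G7"
| "mu20 G7 = G24"
| "mu20 G8 = G17"
| "mu20 G9 = G15"
| "mu20 G10 = G8"
| "mu20 G11 = G25"
| "mu20 G12 = G11"
| "mu20 G13 = G1"
| "mu20 G14 = G18"
| "mu20 G15 = G13"
| "mu20 G16 = G3"
| "mu20 G17 = G23"
| "mu20 G18 = G21"
| "mu20 G19 = G14"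
| "mu20 G20 = G4"
| "mu20 G21 = G26"
| "mu20 G22 = G16"
| "mu20 G23 = G6"
| "mu20 G24 = G19"
| "mu20 G25 = G9"
| "mu20 G26 = G2"

primrec mu21 :: "gf \<Rightarrow> gf" where
  "mu21 G0 = G0"
| "mu21 G1 = G21"
| "mu21 G2 = G15"
| "mu21 G3 = G17"
| "mu21 G4 = G2"
| "mu21 G5 = G23"
| "mu21 G6 = G22"
| "mu21 G7 = G16"
| "mu21 G8 = G1"
| "mu21 G9 = G19"
| "mu21 G10 = G13"
| "mu21 G11 = G7"
| "mu21 G12 = G6"
| "mu21 G13 = G18"
| "mu21 G14 = G12"
| "mu21 G15 = G14"
| "mu21 G16 = G8"
| "mu21 G17 = G20"
| "mu21 G18 = G11"
| "mu21 G19 = G5"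
| "mu21 G20 = G26"
| "mu21 G21 = G25"
| "mu21 G22 = G10"
| "mu21 G23 = G4"
| "mu21 G24 = G3"
| "mu21 G25 = G24"
| "mu21 G26 = G9"

primrec mu22 :: "gf \<Rightarrow> gf" where
  "mu22 G0 = G0"
| "mu22 G1 = G22"
| "mu22 G2 = G17"
| "mu22 G3 = G11"
| "mu22 G4 = G3"
| "mu22 G5 = G25"
| "mu22 G6 = G19"
| "mu22 G7 = G14"
| "mu22 G8 = G6"
| "mu22 G9 = G1"
| "mu22 G10 = G23"
| "mu22 G11 = G15"
| "mu22 G12 = G9"
| "mu22 G13 = G4"
| "mu22 G14 = G26"
| "mu22 G15 = G20"
| "mu22 G16 = G12"
| "mu22 G17 = G7"
| "mu22 G18 = G2"
| "mu22 G19 = G21"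
| "mu22 G20 = G16"
| "mu22 G21 = G10"
| "mu22 G22 = G5"
| "mu22 G23 = G24"
| "mu22 G24 = G18"
| "mu22 G25 = G13"
| "mu22 G26 = G8"

primrec mu23 :: "gf \<Rightarrow> gf" where
  "mu23 G0 = G0"
| "mu23 G1 = G23"
| "mu23 G2 = G16"
| "mu23 G3 = G14"
| "mu23 G4 = G7"
| "mu23 G5 = G18"
| "mu23 G6 = G25"
| "mu23 G7 = G9"
| "mu23 G8 = G5"
| "mu23 G9 = G10"
| "mu23 G10 = G3"
| "mu23 G11 = G26"
| "mu23 G12 = G21"
| "mu23 G13 = G17"
| "mu23 G14 = G1"
| "mu23 G15 = G8"
| "mu23 G16 = G19"
| "mu23 G17 = G12"
| "mu23 G18 = G20"
| "mu23 G19 = G13"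
| "mu23 G20 = G6"
| "mu23 G21 = G4"
| "mu23 G22 = G24"
| "mu23 G23 = G11"
| "mu23 G24 = G15"
| "mu23 G25 = G2"
| "mu23 G26 = G22"

primrec mu24 :: "gf \<Rightarrow> gf" where
  "mu24 G0 = G0"
| "mu24 G1 = G24"
| "mu24 G2 = G12"
| "mu24 G3 = G26"
| "mu24 G4 = G14"
| "mu24 G5 = G2"
| "mu24 G6 = G13"
| "mu24 G7 = G1"
| "mu24 G8 = G25"
| "mu24 G9 = G23"
| "mu24 G10 = G11"
| "mu24 G11 = G8"
| "mu24 G12 = G10"
| "mu24 G13 = G7"
| "mu24 G14 = G22"
| "mu24 G15 = G6"
| "mu24 G16 = G21"
| "mu24 G17 = G9"
| "mu24 G18 = G16"
| "mu24 G19 = G4"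
| "mu24 G20 = G19"
| "mu24 G21 = G3"
| "mu24 G22 = G18"
| "mu24 G23 = G15"
| "mu24 G24 = G20"
| "mu24 G25 = G17"
| "mu24 G26 = G5"

primrec mu25 :: "gf \<Rightarrow> gf" where
  "mu25 G0 = G0"
| "mu25 G1 = G25"
| "mu25 G2 = G14"
| "mu25 G3 = G20"
| "mu25 G4 = G15"
| "mu25 G5 = G4"
| "mu25 G6 = G10"
| "mu25 G7 = G8"
| "mu25 G8 = G21"
| "mu25 G9 = G5"
| "mu25 G10 = G18"
| "mu25 G11 = G16"
| "mu25 G12 = G22"
| "mu25 G13 = G11"
| "mu25 G14 = G6"
| "mu25 G15 = G12"
| "mu25 G16 = G1"
| "mu25 G17 = G26"
| "mu25 G18 = G7"
| "mu25 G19 = G23"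
| "mu25 G20 = G9"
| "mu25 G21 = G24"
| "mu25 G22 = G13"
| "mu25 G23 = G2"
| "mu25 G24 = G17"
| "mu25 G25 = G3"
| "mu25 G26 = G19"

primrec mu26 :: "gf \<Rightarrow> gf" where
  "mu26 G0 = G0"
| "mu26 G1 = G26"
| "mu26 G2 = G13"
| "mu26 G3 = G23"
| "mu26 G4 = G10"
| "mu26 G5 = G6"
| "mu26 G6 = G16"
| "mu26 G7 = G3"
| "mu26 G8 = G20"
| "mu26 G9 = G14"
| "mu26 G10 = G1"
| "mu26 G11 = G24"
| "mu26 G12 = G7"
| "mu26 G13 = G21"
| "mu26 G14 = G11"
| "mu26 G15 = G18"
| "mu26 G16 = G17"
| "mu26 G17 = G4"
| "mu26 G18 = G25"
| "mu26 G19 = G12"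
| "mu26 G20 = G2"
| "mu26 G21 = G9"
| "mu26 G22 = G8"
| "mu26 G23 = G22"
| "mu26 G24 = G5"
| "mu26 G25 = G19"
| "mu26 G26 = G15"

primrec mug :: "gf \<Rightarrow> gf \<Rightarrow> gf" where
  "mug G0 = mu0"
| "mug G1 = mu1"
| "mug G2 = mu2"
| "mug G3 = mu3"
| "mug G4 = mu4"
| "mug G5 = mu5"
| "mug G6 = mu6"
| "mug G7 = mu7"
| "mug G8 = mu8"
| "mug G9 = mu9"
| "mug G10 = mu10"
| "mug G11 = mu11"
| "mug G12 = mu12"
| "mug G13 = mu13"
| "mug G14 = mu14"
| "mug G15 = mu15"
| "mug G16 = mu16"
| "mug G17 = mu17"
| "mug G18 = mu18"
| "mug G19 = mu19"
| "mug G20 = mu20"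
| "mug G21 = mu21"
| "mug G22 = mu22"
| "mug G23 = mu23"
| "mug G24 = mu24"
| "mug G25 = mu25"
| "mug G26 = mu26"

definition allg :: "gf list" where "allg = [G0, G1, G2, G3, G4, G5, G6, G7, G8, G9, G10, G11, G12, G13, G14, G15, G16, G17, G18, G19, G20, G21, G22, G23, G24, G25, G26]"

primrec ng :: "gf \<Rightarrow> gf" where
  "ng G0 = G0"
| "ng G1 = G2"
| "ng G2 = G1"
| "ng G3 = G6"
| "ng G4 = G8"
| "ng G5 = G7"
| "ng G6 = G3"
| "ng G7 = G5"
| "ng G8 = G4"
| "ng G9 = G18"
| "ng G10 = G20"
| "ng G11 = G19"
| "ng G12 = G24"
| "ng G13 = G26"
| "ng G14 = G25"
| "ng G15 = G21"
| "ng G16 = G23"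
| "ng G17 = G22"
| "ng G18 = G9"
| "ng G19 = G11"
| "ng G20 = G10"
| "ng G21 = G15"
| "ng G22 = G17"
| "ng G23 = G16"
| "ng G24 = G12"
| "ng G25 = G14"
| "ng G26 = G13"

definition addc :: "nat \<times> nat \<times> nat \<Rightarrow> nat \<times> nat \<times> nat \<Rightarrow> nat \<times> nat \<times> nat" where
  "addc a b = ((fst a + fst b) mod 3, (fst (snd a) + fst (snd b)) mod 3, (snd (snd a) + snd (snd b)) mod 3)"
lemma cd_ad: "cd (adg x y) = addc (cd x) (cd y)"
  by (cases x; cases y; simp add: addc_def)

definition E :: "'a::field \<Rightarrow> nat \<times> nat \<times> nat \<Rightarrow> 'a" where
  "E \<alpha> c = of_nat (fst c) + of_nat (fst (snd c)) * \<alpha> + of_nat (snd (snd c)) * \<alpha>^2"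

definition mulc :: "nat \<times> nat \<times> nat \<Rightarrow> nat \<times> nat \<times> nat \<Rightarrow> nat \<times> nat \<times> nat" where
  "mulc a b = ((fst a * fst b + (fst (snd a) * snd (snd b) + snd (snd a) * fst (snd b))) mod 3,
               (fst a * fst (snd b) + fst (snd a) * fst b + (fst (snd a) * snd (snd b) + snd (snd a) * fst (snd b)) + snd (snd a) * snd (snd b)) mod 3,
               (fst a * snd (snd b) + fst (snd a) * fst (snd b) + snd (snd a) * fst b + snd (snd a) * snd (snd b)) mod 3)"

lemma of_nat_mod3:
  assumes "(3::'a::field) = 0"
  shows "(of_nat (n mod 3) :: 'a) = of_nat n"
proof -
  have "(of_nat n :: 'a) = of_nat (3 * (n div 3) + n mod 3)" by simp
  also have "\<dots> = 3 * of_nat (n div 3) + of_nat (n mod 3)" by (simp only: of_nat_add of_nat_mult of_nat_numeral)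
  finally show ?thesis using assms by simp
qed

lemma E_add:
  assumes "(3::'a::field) = 0"
  shows "E \<alpha> a + E \<alpha> b = E (\<alpha>::'a) (addc a b)"
  unfolding E_def addc_def using assms by (simp add: of_nat_mod3 algebra_simps)

lemma E_mul:
  assumes h3: "(3::'a::field) = 0" and ha: "\<alpha>^3 = \<alpha> + 1"
  shows "E \<alpha> a * E \<alpha> b = E (\<alpha>::'a) (mulc a b)"
proof -
  obtain a0 a1 a2 where a: "a = (a0,a1,a2)" by (cases a) auto
  obtain b0 b1 b2 where b: "b = (b0,b1,b2)" by (cases b) auto
  have a4: "\<alpha>^4 = \<alpha>^2 + \<alpha>"
  proof -
    have "\<alpha>^4 = \<alpha> * \<alpha>^3" by (simp add: power_Suc[symmetric] del: power_Suc)
    also have "\<dots> = \<alpha>^2 + \<alpha>" using ha by (simp add: algebra_simps power2_eq_square)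
    finally show ?thesis .
  qed
  have "E \<alpha> a * E \<alpha> b = of_nat (a0*b0) + of_nat (a0*b1 + a1*b0) * \<alpha> + of_nat (a0*b2 + a1*b1 + a2*b0) * \<alpha>^2
        + of_nat (a1*b2 + a2*b1) * \<alpha>^3 + of_nat (a2*b2) * \<alpha>^4"
    unfolding E_def a b by (simp add: algebra_simps power2_eq_square power3_eq_cube power4_eq_xxxx)
  also have "\<dots> = of_nat (a0*b0 + (a1*b2 + a2*b1)) + of_nat (a0*b1 + a1*b0 + (a1*b2 + a2*b1) + a2*b2) * \<alpha>
        + of_nat (a0*b2 + a1*b1 + a2*b0 + a2*b2) * \<alpha>^2"
    unfolding ha a4 by (simp add: algebra_simps)
  also have "\<dots> = E \<alpha> (mulc a b)"
    unfolding E_def mulc_def a b using h3 by (simp add: of_nat_mod3)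
  finally show ?thesis .
qed


lemma cd_mu: "cd (mug x y) = mulc (cd x) (cd y)"
  by (cases x; cases y; simp add: mulc_def)

lemma nz_G1:
  fixes \<alpha> :: "'a::field"
  assumes h3: "(3::'a) = 0" and ha: "\<alpha>^3 = \<alpha> + 1" and hz: "E \<alpha> (cd G1) = 0"
  shows False
proof -
  have "(1::'a) = (1*1) * E \<alpha> (cd G1) + (0) * (\<alpha>^3 - (\<alpha> + 1)) + 3 * (0)"
    unfolding E_def by (simp only: cd.simps fst_conv snd_conv of_nat_numeral of_nat_1 of_nat_0) algebra
  also have "\<dots> = 0" using hz ha h3 by simp
  finally show False by simp
qed

lemma nz_G2:
  fixes \<alpha> :: "'a::field"
  assumes h3: "(3::'a) = 0" and ha: "\<alpha>^3 = \<alpha> + 1" and hz: "E \<alpha> (cd G2) = 0"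
  shows False
proof -
  have "(1::'a) = (2*1) * E \<alpha> (cd G2) + (0) * (\<alpha>^3 - (\<alpha> + 1)) + 3 * ((-1)*1)"
    unfolding E_def by (simp only: cd.simps fst_conv snd_conv of_nat_numeral of_nat_1 of_nat_0) algebra
  also have "\<dots> = 0" using hz ha h3 by simp
  finally show False by simp
qed

lemma nz_G3:
  fixes \<alpha> :: "'a::field"
  assumes h3: "(3::'a) = 0" and ha: "\<alpha>^3 = \<alpha> + 1" and hz: "E \<alpha> (cd G3) = 0"
  shows False
proof -
  have "(1::'a) = (2*1 + 1*\<alpha>^2) * E \<alpha> (cd G3) + (2*1) * (\<alpha>^3 - (\<alpha> + 1)) + 3 * (1*1 + (-1)*\<alpha>^3)"
    unfolding E_def by (simp only: cd.simps fst_conv snd_conv of_nat_numeral of_nat_1 of_nat_0) algebra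
  also have "\<dots> = 0" using hz ha h3 by simp
  finally show False by simp
qed

lemma nz_G4:
  fixes \<alpha> :: "'a::field"
  assumes h3: "(3::'a) = 0" and ha: "\<alpha>^3 = \<alpha> + 1" and hz: "E \<alpha> (cd G4) = 0"
  shows False
proof -
  have "(1::'a) = (2*\<alpha> + 1*\<alpha>^2) * E \<alpha> (cd G4) + (2*1) * (\<alpha>^3 - (\<alpha> + 1)) + 3 * (1*1 + (-1)*\<alpha>^2 + (-1)*\<alpha>^3)"
    unfolding E_def by (simp only: cd.simps fst_conv snd_conv of_nat_numeral of_nat_1 of_nat_0) algebra
  also have "\<dots> = 0" using hz ha h3 by simp
  finally show False by simp
qed

lemma nz_G5:
  fixes \<alpha> :: "'a::field"
  assumes h3: "(3::'a) = 0" and ha: "\<alpha>^3 = \<alpha> + 1" and hz: "E \<alpha> (cd G5) = 0"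
  shows False
proof -
  have "(1::'a) = (1*\<alpha> + 1*\<alpha>^2) * E \<alpha> (cd G5) + (2*1) * (\<alpha>^3 - (\<alpha> + 1)) + 3 * (1*1 + (-1)*\<alpha>^2 + (-1)*\<alpha>^3)"
    unfolding E_def by (simp only: cd.simps fst_conv snd_conv of_nat_numeral of_nat_1 of_nat_0) algebra
  also have "\<dots> = 0" using hz ha h3 by simp
  finally show False by simp
qed

lemma nz_G6:
  fixes \<alpha> :: "'a::field"
  assumes h3: "(3::'a) = 0" and ha: "\<alpha>^3 = \<alpha> + 1" and hz: "E \<alpha> (cd G6) = 0"
  shows False
proof -
  have "(1::'a) = (1*1 + 2*\<alpha>^2) * E \<alpha> (cd G6) + (2*1) * (\<alpha>^3 - (\<alpha> + 1)) + 3 * (1*1 + (-2)*\<alpha>^3)"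
    unfolding E_def by (simp only: cd.simps fst_conv snd_conv of_nat_numeral of_nat_1 of_nat_0) algebra
  also have "\<dots> = 0" using hz ha h3 by simp
  finally show False by simp
qed

lemma nz_G7:
  fixes \<alpha> :: "'a::field"
  assumes h3: "(3::'a) = 0" and ha: "\<alpha>^3 = \<alpha> + 1" and hz: "E \<alpha> (cd G7) = 0"
  shows False
proof -
  have "(1::'a) = (2*\<alpha> + 2*\<alpha>^2) * E \<alpha> (cd G7) + (2*1) * (\<alpha>^3 - (\<alpha> + 1)) + 3 * (1*1 + (-2)*\<alpha>^2 + (-2)*\<alpha>^3)"
    unfolding E_def by (simp only: cd.simps fst_conv snd_conv of_nat_numeral of_nat_1 of_nat_0) algebra
  also have "\<dots> = 0" using hz ha h3 by simp
  finally show False by simp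
qed

lemma nz_G8:
  fixes \<alpha> :: "'a::field"
  assumes h3: "(3::'a) = 0" and ha: "\<alpha>^3 = \<alpha> + 1" and hz: "E \<alpha> (cd G8) = 0"
  shows False
proof -
  have "(1::'a) = (1*\<alpha> + 2*\<alpha>^2) * E \<alpha> (cd G8) + (2*1) * (\<alpha>^3 - (\<alpha> + 1)) + 3 * (1*1 + (-2)*\<alpha>^2 + (-2)*\<alpha>^3)"
    unfolding E_def by (simp only: cd.simps fst_conv snd_conv of_nat_numeral of_nat_1 of_nat_0) algebra
  also have "\<dots> = 0" using hz ha h3 by simp
  finally show False by simp
qed

lemma nz_G9:
  fixes \<alpha> :: "'a::field"
  assumes h3: "(3::'a) = 0" and ha: "\<alpha>^3 = \<alpha> + 1" and hz: "E \<alpha> (cd G9) = 0"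
  shows False
proof -
  have "(1::'a) = (1*1 + 1*\<alpha> + 2*\<alpha>^2) * E \<alpha> (cd G9) + (2*1 + 1*\<alpha>) * (\<alpha>^3 - (\<alpha> + 1)) + 3 * (1*1 + 1*\<alpha> + (-1)*\<alpha>^3 + (-1)*\<alpha>^4)"
    unfolding E_def by (simp only: cd.simps fst_conv snd_conv of_nat_numeral of_nat_1 of_nat_0) algebra
  also have "\<dots> = 0" using hz ha h3 by simp
  finally show False by simp
qed

lemma nz_G10:
  fixes \<alpha> :: "'a::field"
  assumes h3: "(3::'a) = 0" and ha: "\<alpha>^3 = \<alpha> + 1" and hz: "E \<alpha> (cd G10) = 0"
  shows False
proof -
  have "(1::'a) = (2*1 + 2*\<alpha> + 2*\<alpha>^2) * E \<alpha> (cd G10) + (1*1 + 1*\<alpha>) * (\<alpha>^3 - (\<alpha> + 1)) + 3 * ((-1)*\<alpha>^2 + (-1)*\<alpha>^3 + (-1)*\<alpha>^4)"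
    unfolding E_def by (simp only: cd.simps fst_conv snd_conv of_nat_numeral of_nat_1 of_nat_0) algebra
  also have "\<dots> = 0" using hz ha h3 by simp
  finally show False by simp
qed

lemma nz_G11:
  fixes \<alpha> :: "'a::field"
  assumes h3: "(3::'a) = 0" and ha: "\<alpha>^3 = \<alpha> + 1" and hz: "E \<alpha> (cd G11) = 0"
  shows False
proof -
  have "(1::'a) = (1*\<alpha>) * E \<alpha> (cd G11) + (2*1) * (\<alpha>^3 - (\<alpha> + 1)) + 3 * (1*1 + (-1)*\<alpha>^3)"
    unfolding E_def by (simp only: cd.simps fst_conv snd_conv of_nat_numeral of_nat_1 of_nat_0) algebra
  also have "\<dots> = 0" using hz ha h3 by simp
  finally show False by simp
qed

lemma nz_G12:
  fixes \<alpha> :: "'a::field"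
  assumes h3: "(3::'a) = 0" and ha: "\<alpha>^3 = \<alpha> + 1" and hz: "E \<alpha> (cd G12) = 0"
  shows False
proof -
  have "(1::'a) = (2*1 + 1*\<alpha>) * E \<alpha> (cd G12) + (2*1) * (\<alpha>^3 - (\<alpha> + 1)) + 3 * (1*1 + (-1)*\<alpha>^2 + (-1)*\<alpha>^3)"
    unfolding E_def by (simp only: cd.simps fst_conv snd_conv of_nat_numeral of_nat_1 of_nat_0) algebra
  also have "\<dots> = 0" using hz ha h3 by simp
  finally show False by simp
qed

lemma nz_G13:
  fixes \<alpha> :: "'a::field"
  assumes h3: "(3::'a) = 0" and ha: "\<alpha>^3 = \<alpha> + 1" and hz: "E \<alpha> (cd G13) = 0"
  shows False
proof -
  have "(1::'a) = (2*1 + 2*\<alpha>^2) * E \<alpha> (cd G13) + (1*1 + 1*\<alpha>) * (\<alpha>^3 - (\<alpha> + 1)) + 3 * ((-1)*\<alpha>^2 + (-1)*\<alpha>^3 + (-1)*\<alpha>^4)"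
    unfolding E_def by (simp only: cd.simps fst_conv snd_conv of_nat_numeral of_nat_1 of_nat_0) algebra
  also have "\<dots> = 0" using hz ha h3 by simp
  finally show False by simp
qed

lemma nz_G14:
  fixes \<alpha> :: "'a::field"
  assumes h3: "(3::'a) = 0" and ha: "\<alpha>^3 = \<alpha> + 1" and hz: "E \<alpha> (cd G14) = 0"
  shows False
proof -
  have "(1::'a) = (2*1 + 1*\<alpha> + 2*\<alpha>^2) * E \<alpha> (cd G14) + (1*\<alpha>) * (\<alpha>^3 - (\<alpha> + 1)) + 3 * ((-1)*1 + (-1)*\<alpha> + (-2)*\<alpha>^2 + (-1)*\<alpha>^3 + (-1)*\<alpha>^4)"
    unfolding E_def by (simp only: cd.simps fst_conv snd_conv of_nat_numeral of_nat_1 of_nat_0) algebra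
  also have "\<dots> = 0" using hz ha h3 by simp
  finally show False by simp
qed

lemma nz_G15:
  fixes \<alpha> :: "'a::field"
  assumes h3: "(3::'a) = 0" and ha: "\<alpha>^3 = \<alpha> + 1" and hz: "E \<alpha> (cd G15) = 0"
  shows False
proof -
  have "(1::'a) = (1*1 + 1*\<alpha>) * E \<alpha> (cd G15) + (2*1) * (\<alpha>^3 - (\<alpha> + 1)) + 3 * (1*1 + (-1)*\<alpha>^2 + (-1)*\<alpha>^3)"
    unfolding E_def by (simp only: cd.simps fst_conv snd_conv of_nat_numeral of_nat_1 of_nat_0) algebra
  also have "\<dots> = 0" using hz ha h3 by simp
  finally show False by simp
qed

lemma nz_G16:
  fixes \<alpha> :: "'a::field"
  assumes h3: "(3::'a) = 0" and ha: "\<alpha>^3 = \<alpha> + 1" and hz: "E \<alpha> (cd G16) = 0"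
  shows False
proof -
  have "(1::'a) = (1*1 + 2*\<alpha> + 2*\<alpha>^2) * E \<alpha> (cd G16) + (1*\<alpha>) * (\<alpha>^3 - (\<alpha> + 1)) + 3 * ((-1)*\<alpha> + (-2)*\<alpha>^2 + (-2)*\<alpha>^3 + (-1)*\<alpha>^4)"
    unfolding E_def by (simp only: cd.simps fst_conv snd_conv of_nat_numeral of_nat_1 of_nat_0) algebra
  also have "\<dots> = 0" using hz ha h3 by simp
  finally show False by simp
qed

lemma nz_G17:
  fixes \<alpha> :: "'a::field"
  assumes h3: "(3::'a) = 0" and ha: "\<alpha>^3 = \<alpha> + 1" and hz: "E \<alpha> (cd G17) = 0"
  shows False
proof -
  have "(1::'a) = (2*\<alpha>^2) * E \<alpha> (cd G17) + (2*1 + 1*\<alpha>) * (\<alpha>^3 - (\<alpha> + 1)) + 3 * (1*1 + 1*\<alpha> + (-1)*\<alpha>^2 + (-2)*\<alpha>^3 + (-1)*\<alpha>^4)"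
    unfolding E_def by (simp only: cd.simps fst_conv snd_conv of_nat_numeral of_nat_1 of_nat_0) algebra
  also have "\<dots> = 0" using hz ha h3 by simp
  finally show False by simp
qed

lemma nz_G18:
  fixes \<alpha> :: "'a::field"
  assumes h3: "(3::'a) = 0" and ha: "\<alpha>^3 = \<alpha> + 1" and hz: "E \<alpha> (cd G18) = 0"
  shows False
proof -
  have "(1::'a) = (2*1 + 2*\<alpha> + 1*\<alpha>^2) * E \<alpha> (cd G18) + (2*1 + 1*\<alpha>) * (\<alpha>^3 - (\<alpha> + 1)) + 3 * (1*1 + 1*\<alpha> + (-1)*\<alpha>^2 + (-2)*\<alpha>^3 + (-1)*\<alpha>^4)"
    unfolding E_def by (simp only: cd.simps fst_conv snd_conv of_nat_numeral of_nat_1 of_nat_0) algebra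
  also have "\<dots> = 0" using hz ha h3 by simp
  finally show False by simp
qed

lemma nz_G19:
  fixes \<alpha> :: "'a::field"
  assumes h3: "(3::'a) = 0" and ha: "\<alpha>^3 = \<alpha> + 1" and hz: "E \<alpha> (cd G19) = 0"
  shows False
proof -
  have "(1::'a) = (2*\<alpha>) * E \<alpha> (cd G19) + (2*1) * (\<alpha>^3 - (\<alpha> + 1)) + 3 * (1*1 + (-2)*\<alpha>^3)"
    unfolding E_def by (simp only: cd.simps fst_conv snd_conv of_nat_numeral of_nat_1 of_nat_0) algebra
  also have "\<dots> = 0" using hz ha h3 by simp
  finally show False by simp
qed

lemma nz_G20:
  fixes \<alpha> :: "'a::field"
  assumes h3: "(3::'a) = 0" and ha: "\<alpha>^3 = \<alpha> + 1" and hz: "E \<alpha> (cd G20) = 0"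
  shows False
proof -
  have "(1::'a) = (1*1 + 1*\<alpha> + 1*\<alpha>^2) * E \<alpha> (cd G20) + (1*1 + 1*\<alpha>) * (\<alpha>^3 - (\<alpha> + 1)) + 3 * ((-1)*\<alpha>^2 + (-1)*\<alpha>^3 + (-1)*\<alpha>^4)"
    unfolding E_def by (simp only: cd.simps fst_conv snd_conv of_nat_numeral of_nat_1 of_nat_0) algebra
  also have "\<dots> = 0" using hz ha h3 by simp
  finally show False by simp
qed

lemma nz_G21:
  fixes \<alpha> :: "'a::field"
  assumes h3: "(3::'a) = 0" and ha: "\<alpha>^3 = \<alpha> + 1" and hz: "E \<alpha> (cd G21) = 0"
  shows False
proof -
  have "(1::'a) = (2*1 + 2*\<alpha>) * E \<alpha> (cd G21) + (2*1) * (\<alpha>^3 - (\<alpha> + 1)) + 3 * (1*1 + (-2)*\<alpha>^2 + (-2)*\<alpha>^3)"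
    unfolding E_def by (simp only: cd.simps fst_conv snd_conv of_nat_numeral of_nat_1 of_nat_0) algebra
  also have "\<dots> = 0" using hz ha h3 by simp
  finally show False by simp
qed

lemma nz_G22:
  fixes \<alpha> :: "'a::field"
  assumes h3: "(3::'a) = 0" and ha: "\<alpha>^3 = \<alpha> + 1" and hz: "E \<alpha> (cd G22) = 0"
  shows False
proof -
  have "(1::'a) = (1*\<alpha>^2) * E \<alpha> (cd G22) + (2*1 + 1*\<alpha>) * (\<alpha>^3 - (\<alpha> + 1)) + 3 * (1*1 + 1*\<alpha> + (-1)*\<alpha>^3 + (-1)*\<alpha>^4)"
    unfolding E_def by (simp only: cd.simps fst_conv snd_conv of_nat_numeral of_nat_1 of_nat_0) algebra
  also have "\<dots> = 0" using hz ha h3 by simp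
  finally show False by simp
qed

lemma nz_G23:
  fixes \<alpha> :: "'a::field"
  assumes h3: "(3::'a) = 0" and ha: "\<alpha>^3 = \<alpha> + 1" and hz: "E \<alpha> (cd G23) = 0"
  shows False
proof -
  have "(1::'a) = (2*1 + 1*\<alpha> + 1*\<alpha>^2) * E \<alpha> (cd G23) + (1*\<alpha>) * (\<alpha>^3 - (\<alpha> + 1)) + 3 * ((-1)*1 + (-1)*\<alpha> + (-2)*\<alpha>^2 + (-1)*\<alpha>^3 + (-1)*\<alpha>^4)"
    unfolding E_def by (simp only: cd.simps fst_conv snd_conv of_nat_numeral of_nat_1 of_nat_0) algebra
  also have "\<dots> = 0" using hz ha h3 by simp
  finally show False by simp
qed

lemma nz_G24:
  fixes \<alpha> :: "'a::field"
  assumes h3: "(3::'a) = 0" and ha: "\<alpha>^3 = \<alpha> + 1" and hz: "E \<alpha> (cd G24) = 0"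
  shows False
proof -
  have "(1::'a) = (1*1 + 2*\<alpha>) * E \<alpha> (cd G24) + (2*1) * (\<alpha>^3 - (\<alpha> + 1)) + 3 * (1*1 + (-2)*\<alpha>^2 + (-2)*\<alpha>^3)"
    unfolding E_def by (simp only: cd.simps fst_conv snd_conv of_nat_numeral of_nat_1 of_nat_0) algebra
  also have "\<dots> = 0" using hz ha h3 by simp
  finally show False by simp
qed

lemma nz_G25:
  fixes \<alpha> :: "'a::field"
  assumes h3: "(3::'a) = 0" and ha: "\<alpha>^3 = \<alpha> + 1" and hz: "E \<alpha> (cd G25) = 0"
  shows False
proof -
  have "(1::'a) = (1*1 + 2*\<alpha> + 1*\<alpha>^2) * E \<alpha> (cd G25) + (1*\<alpha>) * (\<alpha>^3 - (\<alpha> + 1)) + 3 * ((-1)*\<alpha> + (-2)*\<alpha>^2 + (-2)*\<alpha>^3 + (-1)*\<alpha>^4)"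
    unfolding E_def by (simp only: cd.simps fst_conv snd_conv of_nat_numeral of_nat_1 of_nat_0) algebra
  also have "\<dots> = 0" using hz ha h3 by simp
  finally show False by simp
qed

lemma nz_G26:
  fixes \<alpha> :: "'a::field"
  assumes h3: "(3::'a) = 0" and ha: "\<alpha>^3 = \<alpha> + 1" and hz: "E \<alpha> (cd G26) = 0"
  shows False
proof -
  have "(1::'a) = (1*1 + 1*\<alpha>^2) * E \<alpha> (cd G26) + (1*1 + 1*\<alpha>) * (\<alpha>^3 - (\<alpha> + 1)) + 3 * ((-1)*\<alpha>^2 + (-1)*\<alpha>^3 + (-1)*\<alpha>^4)"
    unfolding E_def by (simp only: cd.simps fst_conv snd_conv of_nat_numeral of_nat_1 of_nat_0) algebra
  also have "\<dots> = 0" using hz ha h3 by simp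
  finally show False by simp
qed

definition phi :: "'a::field \<Rightarrow> gf \<Rightarrow> 'a" where "phi \<alpha> x = E \<alpha> (cd x)"

lemma phi_add: "(3::'a::field) = 0 \<Longrightarrow> phi (\<alpha>::'a) (adg x y) = phi \<alpha> x + phi \<alpha> y"
  unfolding phi_def by (simp add: cd_ad E_add)

lemma phi_mul: "(3::'a::field) = 0 \<Longrightarrow> \<alpha>^3 = \<alpha> + 1 \<Longrightarrow> phi (\<alpha>::'a) (mug x y) = phi \<alpha> x * phi \<alpha> y"
  unfolding phi_def by (simp add: cd_mu E_mul)

lemma phi_G0: "phi \<alpha> G0 = 0" unfolding phi_def E_def by simp
lemma phi_G1: "phi \<alpha> G1 = 1" unfolding phi_def E_def by simp

lemma phi_zero:
  fixes \<alpha> :: "'a::field"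
  assumes h3: "(3::'a) = 0" and ha: "\<alpha>^3 = \<alpha> + 1"
  shows "phi \<alpha> x = 0 \<longleftrightarrow> x = G0"
proof
  assume "phi \<alpha> x = 0"
  hence z: "E \<alpha> (cd x) = 0" unfolding phi_def .
  show "x = G0"
    using z nz_G1[OF h3 ha] nz_G2[OF h3 ha] nz_G3[OF h3 ha] nz_G4[OF h3 ha] nz_G5[OF h3 ha]
      nz_G6[OF h3 ha] nz_G7[OF h3 ha] nz_G8[OF h3 ha] nz_G9[OF h3 ha] nz_G10[OF h3 ha]
      nz_G11[OF h3 ha] nz_G12[OF h3 ha] nz_G13[OF h3 ha] nz_G14[OF h3 ha] nz_G15[OF h3 ha]
      nz_G16[OF h3 ha] nz_G17[OF h3 ha] nz_G18[OF h3 ha] nz_G19[OF h3 ha] nz_G20[OF h3 ha]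
      nz_G21[OF h3 ha] nz_G22[OF h3 ha] nz_G23[OF h3 ha] nz_G24[OF h3 ha] nz_G25[OF h3 ha]
      nz_G26[OF h3 ha]
    by (cases x) auto
next
  assume "x = G0" thus "phi \<alpha> x = 0" by (simp add: phi_G0)
qed

lemma ad_ng: "adg y (ng y) = G0" by (cases y) simp_all

lemma ad_ng_eq: "adg x (ng y) = G0 \<Longrightarrow> x = y" by (cases x; cases y; simp)

lemma phi_inj:
  fixes \<alpha> :: "'a::field"
  assumes h3: "(3::'a) = 0" and ha: "\<alpha>^3 = \<alpha> + 1"
  shows "inj (phi \<alpha>)"
proof (rule injI)
  fix x y assume e: "phi \<alpha> x = phi \<alpha> y"
  have "phi \<alpha> (adg x (ng y)) = phi \<alpha> (adg y (ng y))"
    using e by (simp add: phi_add[OF h3])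
  also have "\<dots> = 0" by (simp add: ad_ng phi_G0)
  finally have "adg x (ng y) = G0" using phi_zero[OF h3 ha] by blast
  thus "x = y" by (rule ad_ng_eq)
qed

lemma allg_UNIV: "set allg = UNIV"
proof -
  have "x \<in> set allg" for x by (cases x) (simp_all add: allg_def)
  thus ?thesis by blast
qed

lemma card_gf: "card (UNIV :: gf set) = 27"
proof -
  have "distinct allg" by (simp add: allg_def)
  hence "card (set allg) = length allg" by (rule distinct_card)
  thus ?thesis by (simp add: allg_UNIV[symmetric] allg_def)
qed

lemma phi_surj:
  fixes \<alpha> :: "'a::{field,finite}"
  assumes c: "card (UNIV :: 'a set) = 27" and h3: "(3::'a) = 0" and ha: "\<alpha>^3 = \<alpha> + 1"
  shows "\<exists>x. phi \<alpha> x = a"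
proof -
  have fin: "finite (UNIV :: gf set)" by (simp add: allg_UNIV[symmetric])
  have "card (range (phi \<alpha>)) = 27"
    using card_image[OF phi_inj[OF h3 ha]] card_gf by simp
  hence "range (phi \<alpha>) = UNIV"
    using c by (simp add: card_subset_eq)
  thus ?thesis by (metis UNIV_I imageE)
qed

primrec ivg :: "gf \<Rightarrow> gf" where
  "ivg G0 = G0"
| "ivg G1 = G1"
| "ivg G2 = G2"
| "ivg G3 = G11"
| "ivg G4 = G15"
| "ivg G5 = G12"
| "ivg G6 = G19"
| "ivg G7 = G24"
| "ivg G8 = G21"
| "ivg G9 = G22"
| "ivg G10 = G26"
| "ivg G11 = G3"
| "ivg G12 = G5"
| "ivg G13 = G20"
| "ivg G14 = G23"
| "ivg G15 = G4"
| "ivg G16 = G25"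
| "ivg G17 = G18"
| "ivg G18 = G17"
| "ivg G19 = G6"
| "ivg G20 = G13"
| "ivg G21 = G8"
| "ivg G22 = G9"
| "ivg G23 = G14"
| "ivg G24 = G7"
| "ivg G25 = G16"
| "ivg G26 = G10"

definition dvg :: "gf \<Rightarrow> gf \<Rightarrow> gf" where "dvg b c = mug b (ivg c)"

definition dotg :: "gf \<times> gf \<times> gf \<Rightarrow> gf \<times> gf \<times> gf \<Rightarrow> gf" where
  "dotg m p = adg (adg (mug (fst m) (fst p)) (mug (fst (snd m)) (fst (snd p)))) (mug (snd (snd m)) (snd (snd p)))"

definition ptsList :: "(gf \<times> gf \<times> gf) list" where
  "ptsList = [(G1, G0, G1),
    (G1, G0, G2),
    (G1, G1, G1),
    (G1, G1, G2),
    (G1, G2, G1),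
    (G1, G2, G2),
    (G1, G3, G10),
    (G1, G3, G11),
    (G1, G3, G13),
    (G1, G3, G14),
    (G1, G3, G19),
    (G1, G3, G20),
    (G1, G3, G25),
    (G1, G3, G26),
    (G1, G4, G9),
    (G1, G4, G10),
    (G1, G4, G15),
    (G1, G4, G17),
    (G1, G4, G18),
    (G1, G4, G20),
    (G1, G4, G21),
    (G1, G4, G22),
    (G1, G5, G12),
    (G1, G5, G14),
    (G1, G5, G16),
    (G1, G5, G17),
    (G1, G5, G22),
    (G1, G5, G23),
    (G1, G5, G24),
    (G1, G5, G25),
    (G1, G6, G3),
    (G1, G6, G4),
    (G1, G6, G6),
    (G1, G6, G8),
    (G1, G6, G13),
    (G1, G6, G14),
    (G1, G6, G25),
    (G1, G6, G26),
    (G1, G7, G3),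
    (G1, G7, G5),
    (G1, G7, G6),
    (G1, G7, G7),
    (G1, G7, G16),
    (G1, G7, G17),
    (G1, G7, G22),
    (G1, G7, G23),
    (G1, G8, G4),
    (G1, G8, G5),
    (G1, G8, G7),
    (G1, G8, G8),
    (G1, G8, G9),
    (G1, G8, G10),
    (G1, G8, G18),
    (G1, G8, G20),
    (G1, G9, G12),
    (G1, G9, G14),
    (G1, G9, G16),
    (G1, G9, G17),
    (G1, G9, G22),
    (G1, G9, G23),
    (G1, G9, G24),
    (G1, G9, G25),
    (G1, G10, G3),
    (G1, G10, G6),
    (G1, G10, G9),
    (G1, G10, G10),
    (G1, G10, G14),
    (G1, G10, G18),
    (G1, G10, G20),
    (G1, G10, G25),
    (G1, G11, G3),
    (G1, G11, G5),
    (G1, G11, G6),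
    (G1, G11, G7),
    (G1, G11, G14),
    (G1, G11, G15),
    (G1, G11, G21),
    (G1, G11, G25),
    (G1, G12, G4),
    (G1, G12, G5),
    (G1, G12, G7),
    (G1, G12, G8),
    (G1, G12, G11),
    (G1, G12, G17),
    (G1, G12, G19),
    (G1, G12, G22),
    (G1, G13, G9),
    (G1, G13, G10),
    (G1, G13, G15),
    (G1, G13, G17),
    (G1, G13, G18),
    (G1, G13, G20),
    (G1, G13, G21),
    (G1, G13, G22),
    (G1, G14, G5),
    (G1, G14, G7),
    (G1, G14, G13),
    (G1, G14, G14),
    (G1, G14, G17),
    (G1, G14, G22),
    (G1, G14, G25),
    (G1, G14, G26),
    (G1, G15, G3),
    (G1, G15, G4),
    (G1, G15, G6),
    (G1, G15, G8),
    (G1, G15, G10),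
    (G1, G15, G12),
    (G1, G15, G20),
    (G1, G15, G24),
    (G1, G16, G10),
    (G1, G16, G11),
    (G1, G16, G13),
    (G1, G16, G14),
    (G1, G16, G19),
    (G1, G16, G20),
    (G1, G16, G25),
    (G1, G16, G26),
    (G1, G17, G4),
    (G1, G17, G8),
    (G1, G17, G10),
    (G1, G17, G16),
    (G1, G17, G17),
    (G1, G17, G20),
    (G1, G17, G22),
    (G1, G17, G23),
    (G1, G18, G4),
    (G1, G18, G8),
    (G1, G18, G13),
    (G1, G18, G15),
    (G1, G18, G16),
    (G1, G18, G21),
    (G1, G18, G23),
    (G1, G18, G26),
    (G1, G19, G1),
    (G1, G19, G2),
    (G1, G19, G10),
    (G1, G19, G13),
    (G1, G19, G15),
    (G1, G19, G20),
    (G1, G19, G21),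
    (G1, G19, G26),
    (G1, G20, G1),
    (G1, G20, G2),
    (G1, G20, G9),
    (G1, G20, G12),
    (G1, G20, G16),
    (G1, G20, G18),
    (G1, G20, G23),
    (G1, G20, G24),
    (G1, G21, G1),
    (G1, G21, G2),
    (G1, G21, G9),
    (G1, G21, G12),
    (G1, G21, G17),
    (G1, G21, G18),
    (G1, G21, G22),
    (G1, G21, G24),
    (G1, G22, G1),
    (G1, G22, G2),
    (G1, G22, G11),
    (G1, G22, G13),
    (G1, G22, G16),
    (G1, G22, G19),
    (G1, G22, G23),
    (G1, G22, G26),
    (G1, G23, G5),
    (G1, G23, G7),
    (G1, G23, G9),
    (G1, G23, G12),
    (G1, G23, G13),
    (G1, G23, G18),
    (G1, G23, G24),
    (G1, G23, G26),
    (G1, G24, G1),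
    (G1, G24, G2),
    (G1, G24, G11),
    (G1, G24, G14),
    (G1, G24, G16),
    (G1, G24, G19),
    (G1, G24, G23),
    (G1, G24, G25),
    (G1, G25, G1),
    (G1, G25, G2),
    (G1, G25, G9),
    (G1, G25, G13),
    (G1, G25, G15),
    (G1, G25, G18),
    (G1, G25, G21),
    (G1, G25, G26),
    (G1, G26, G3),
    (G1, G26, G6),
    (G1, G26, G9),
    (G1, G26, G11),
    (G1, G26, G16),
    (G1, G26, G18),
    (G1, G26, G19),
    (G1, G26, G23),
    (G0, G1, G1),
    (G0, G1, G2),
    (G0, G0, G1)]"


definition linesList :: "(gf \<times> gf \<times> gf) list" where
  "linesList = map (\<lambda>yz. (G1, fst yz, snd yz)) (List.product allg allg) @ map (\<lambda>z. (G0, G1, z)) allg @ [(G0, G0, G1)]"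

definition cnt :: "gf \<times> gf \<times> gf \<Rightarrow> nat" where
  "cnt m = length (filter (\<lambda>p. dotg m p = G0) ptsList)"

definition Aq :: "gf \<Rightarrow> gf \<Rightarrow> gf \<times> gf \<times> gf \<Rightarrow> gf" where
  "Aq x y p = adg (mug x (fst p)) (mug y (fst (snd p)))"

definition Kc :: "gf \<Rightarrow> gf \<Rightarrow> nat" where
  "Kc x y = length (filter (\<lambda>p. snd (snd p) = G0 \<and> Aq x y p = G0) ptsList)"

definition Rc :: "gf \<Rightarrow> gf \<Rightarrow> gf list" where
  "Rc x y = map (\<lambda>p. dvg (ng (Aq x y p)) (snd (snd p))) (filter (\<lambda>p. snd (snd p) \<noteq> G0) ptsList)"

lemma chk_G1_G0: "Kc G1 G0 + length (filter (\<lambda>r. r = z) (Rc G1 G0)) \<le> 9"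
proof -
  have k: "Kc G1 G0 = 0" by (simp add: Kc_def Aq_def ptsList_def)
  have r: "Rc G1 G0 = [G2, G1, G2, G1, G2, G1, G13, G6, G10, G16, G3, G26, G23, G20, G17, G13, G8, G9, G22, G26, G4, G18, G7, G16, G14, G9, G18, G25, G5, G23, G19, G21, G11, G15, G10, G16, G23, G20, G19, G24, G11, G12, G14, G9, G18, G25, G21, G24, G12, G15, G17, G13, G22, G26, G7, G16, G14, G9, G18, G25, G5, G23, G19, G11, G17, G13, G16, G22, G26, G23, G19, G24, G11, G12, G16, G8, G4, G23, G21, G24, G12, G15, G6, G9, G3, G18, G17, G13, G8, G9, G22, G26, G4, G18, G24, G12, G10, G16, G9, G18, G23, G20, G19, G21, G11, G15, G13, G7, G26, G5, G13, G6, G10, G16, G3, G26, G23, G20, G21, G15, G13, G14, G9, G26, G18, G25, G21, G15, G10, G8, G14, G4, G25, G20, G2, G1, G13, G10, G8, G26, G4, G20, G2, G1, G17, G7, G14, G22, G25, G5, G2, G1, G17, G7, G9, G22, G18, G5, G2, G1, G6, G10, G14, G3, G25, G20, G24, G12, G17, G7, G10, G22, G5, G20, G2, G1, G6, G16, G14, G3, G25, G23, G2, G1, G17, G10, G8, G22, G4, G20, G19, G11, G17, G6, G14, G22, G3, G25, G0, G0, G0]" by (simp add: Rc_def Aq_def ptsList_def dvg_def)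
  show ?thesis unfolding k r by (cases z) simp_all
qed

lemma chk_G1_G1: "Kc G1 G1 + length (filter (\<lambda>r. r = z) (Rc G1 G1)) \<le> 9"
proof -
  have k: "Kc G1 G1 = 0" by (simp add: Kc_def Aq_def ptsList_def)
  have r: "Rc G1 G1 = [G2, G1, G1, G2, G0, G0, G20, G24, G17, G5, G12, G10, G7, G22, G14, G3, G19, G22, G25, G6, G11, G17, G21, G25, G10, G4, G8, G20, G15, G14, G20, G16, G10, G23, G12, G18, G9, G24, G9, G25, G18, G14, G15, G26, G13, G21, G22, G13, G26, G17, G11, G23, G19, G16, G12, G6, G9, G21, G15, G18, G24, G3, G17, G22, G21, G12, G13, G15, G24, G26, G6, G23, G3, G16, G20, G26, G13, G10, G18, G7, G5, G9, G23, G25, G16, G14, G13, G19, G15, G7, G26, G11, G21, G5, G10, G20, G19, G15, G16, G23, G21, G11, G26, G8, G13, G4, G22, G18, G17, G9, G8, G11, G16, G24, G19, G4, G12, G23, G14, G25, G9, G24, G11, G18, G19, G12, G5, G7, G25, G9, G16, G18, G23, G14, G10, G20, G1, G8, G17, G2, G22, G4, G9, G18, G1, G22, G5, G2, G7, G17, G17, G22, G7, G14, G1, G5, G2, G25, G16, G23, G25, G3, G1, G14, G2, G6, G3, G6, G20, G16, G13, G10, G23, G26, G14, G25, G10, G1, G6, G20, G3, G2, G13, G26, G4, G1, G20, G8, G10, G2, G4, G8, G9, G13, G22, G18, G26, G17, G2, G1, G0]" by (simp add: Rc_def Aq_def ptsList_def dvg_def)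
  show ?thesis unfolding k r by (cases z) simp_all
qed

lemma chk_G1_G2: "Kc G1 G2 + length (filter (\<lambda>r. r = z) (Rc G1 G2)) \<le> 9"
proof -
  have k: "Kc G1 G2 = 0" by (simp add: Kc_def Aq_def ptsList_def)
  have r: "Rc G1 G2 = [G2, G1, G0, G0, G1, G2, G6, G15, G12, G18, G21, G3, G9, G24, G11, G23, G12, G8, G19, G16, G24, G4, G11, G7, G15, G26, G13, G21, G19, G5, G18, G2, G9, G1, G17, G5, G7, G22, G2, G26, G1, G13, G10, G4, G8, G20, G23, G2, G1, G16, G14, G3, G25, G6, G20, G26, G16, G6, G3, G23, G10, G13, G3, G6, G1, G14, G10, G2, G25, G20, G14, G19, G25, G11, G3, G17, G22, G6, G24, G17, G22, G12, G10, G5, G20, G7, G9, G7, G25, G23, G18, G5, G14, G16, G5, G7, G1, G17, G14, G25, G22, G2, G21, G10, G15, G20, G4, G14, G8, G25, G18, G22, G13, G8, G17, G9, G4, G26, G4, G8, G17, G1, G10, G22, G20, G2, G13, G26, G4, G22, G9, G17, G18, G8, G18, G9, G25, G21, G26, G14, G13, G15, G19, G11, G21, G10, G23, G15, G16, G20, G23, G16, G24, G18, G20, G12, G10, G9, G21, G15, G17, G26, G24, G22, G12, G13, G9, G18, G5, G25, G16, G7, G14, G23, G26, G13, G23, G22, G19, G16, G11, G17, G24, G12, G18, G19, G14, G9, G25, G11, G16, G23, G13, G20, G3, G26, G10, G6, G1, G2, G0]" by (simp add: Rc_def Aq_def ptsList_def dvg_def)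
  show ?thesis unfolding k r by (cases z) simp_all
qed

lemma chk_G1_G3: "Kc G1 G3 + length (filter (\<lambda>r. r = z) (Rc G1 G3)) \<le> 9"
proof -
  have k: "Kc G1 G3 = 0" by (simp add: Kc_def Aq_def ptsList_def)
  have r: "Rc G1 G3 = [G2, G1, G8, G4, G5, G7, G2, G5, G4, G6, G7, G1, G3, G8, G8, G15, G10, G25, G4, G21, G20, G14, G18, G11, G2, G20, G10, G1, G9, G19, G22, G5, G17, G7, G25, G26, G13, G14, G21, G18, G15, G9, G26, G1, G2, G13, G24, G17, G22, G12, G26, G11, G13, G19, G26, G9, G8, G22, G17, G4, G13, G18, G9, G18, G3, G10, G7, G6, G20, G5, G11, G12, G19, G24, G23, G4, G8, G16, G12, G22, G17, G24, G20, G7, G10, G5, G5, G8, G3, G2, G7, G4, G6, G1, G8, G4, G14, G13, G3, G6, G26, G25, G13, G4, G26, G8, G17, G9, G22, G18, G21, G16, G1, G17, G23, G15, G22, G2, G26, G13, G1, G18, G15, G2, G21, G9, G22, G17, G5, G12, G20, G24, G10, G7, G0, G0, G0, G0, G0, G0, G0, G0, G6, G3, G19, G21, G10, G11, G20, G15, G21, G15, G10, G23, G11, G20, G19, G16, G18, G9, G8, G21, G7, G4, G5, G15, G10, G20, G18, G2, G19, G9, G1, G11, G12, G24, G13, G21, G22, G26, G17, G15, G9, G18, G1, G15, G13, G2, G26, G21, G5, G7, G20, G22, G12, G10, G17, G24, G6, G3, G0]" by (simp add: Rc_def Aq_def ptsList_def dvg_def)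
  show ?thesis unfolding k r by (cases z) simp_all
qed

lemma chk_G1_G4: "Kc G1 G4 + length (filter (\<lambda>r. r = z) (Rc G1 G4)) \<le> 9"
proof -
  have k: "Kc G1 G4 = 0" by (simp add: Kc_def Aq_def ptsList_def)
  have r: "Rc G1 G4 = [G2, G1, G7, G5, G3, G6, G15, G23, G2, G22, G16, G21, G17, G1, G5, G8, G3, G2, G7, G4, G6, G1, G17, G20, G7, G12, G24, G5, G22, G10, G23, G24, G16, G12, G18, G1, G2, G9, G14, G19, G25, G11, G18, G15, G21, G9, G25, G3, G6, G14, G20, G18, G10, G9, G4, G2, G3, G7, G5, G6, G8, G1, G7, G5, G10, G9, G4, G20, G18, G8, G25, G11, G14, G19, G6, G22, G17, G3, G9, G5, G7, G18, G16, G14, G23, G25, G1, G14, G13, G24, G2, G25, G26, G12, G18, G9, G23, G12, G1, G2, G24, G16, G11, G15, G19, G21, G26, G5, G13, G7, G16, G18, G7, G25, G9, G23, G14, G5, G16, G23, G6, G4, G17, G3, G22, G8, G3, G6, G11, G25, G22, G14, G17, G19, G11, G19, G24, G25, G9, G12, G18, G14, G16, G23, G12, G9, G1, G24, G2, G18, G0, G0, G0, G0, G0, G0, G0, G0, G8, G4, G24, G17, G21, G12, G15, G22, G25, G14, G3, G11, G22, G6, G19, G17, G24, G12, G26, G15, G17, G13, G22, G21, G23, G16, G24, G6, G7, G12, G5, G3, G17, G22, G21, G2, G23, G15, G1, G16, G8, G4, G0]" by (simp add: Rc_def Aq_def ptsList_def dvg_def)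
  show ?thesis unfolding k r by (cases z) simp_all
qed

lemma chk_G1_G5: "Kc G1 G5 + length (filter (\<lambda>r. r = z) (Rc G1 G5)) \<le> 9"
proof -
  have k: "Kc G1 G5 = 0" by (simp add: Kc_def Aq_def ptsList_def)
  have r: "Rc G1 G5 = [G2, G1, G6, G3, G4, G8, G22, G14, G6, G11, G25, G17, G19, G3, G2, G25, G26, G12, G1, G14, G13, G24, G4, G2, G3, G7, G5, G6, G8, G1, G21, G10, G15, G20, G23, G12, G24, G16, G4, G20, G8, G10, G22, G23, G16, G17, G26, G19, G11, G13, G23, G1, G16, G2, G9, G19, G1, G10, G20, G2, G18, G11, G23, G16, G26, G11, G1, G13, G19, G2, G3, G16, G6, G23, G10, G13, G26, G20, G15, G12, G24, G21, G3, G18, G6, G9, G6, G20, G23, G13, G3, G10, G16, G26, G13, G26, G5, G14, G8, G4, G25, G7, G15, G20, G21, G10, G8, G25, G4, G14, G2, G5, G4, G6, G7, G1, G3, G8, G6, G3, G5, G17, G16, G7, G23, G22, G14, G25, G26, G2, G24, G1, G12, G13, G19, G11, G12, G14, G18, G24, G9, G25, G26, G13, G8, G6, G19, G4, G11, G3, G15, G21, G20, G16, G19, G10, G11, G23, G13, G26, G16, G1, G11, G23, G19, G2, G4, G8, G15, G20, G25, G21, G10, G14, G0, G0, G0, G0, G0, G0, G0, G0, G7, G5, G14, G24, G19, G25, G11, G12, G20, G10, G25, G15, G4, G14, G21, G8, G7, G5, G0]" by (simp add: Rc_def Aq_def ptsList_def dvg_def)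
  show ?thesis unfolding k r by (cases z) simp_all
qed

lemma chk_G1_G6: "Kc G1 G6 + length (filter (\<lambda>r. r = z) (Rc G1 G6)) \<le> 9"
proof -
  have k: "Kc G1 G6 = 0" by (simp add: Kc_def Aq_def ptsList_def)
  have r: "Rc G1 G6 = [G2, G1, G5, G7, G8, G4, G24, G1, G25, G26, G2, G12, G13, G14, G26, G11, G21, G5, G13, G19, G15, G7, G14, G12, G26, G1, G2, G13, G25, G24, G25, G13, G14, G26, G4, G6, G3, G8, G26, G21, G13, G15, G2, G20, G10, G1, G18, G7, G5, G9, G8, G15, G4, G21, G15, G14, G20, G8, G4, G10, G21, G25, G2, G1, G19, G16, G25, G11, G23, G14, G0, G0, G0, G0, G0, G0, G0, G0, G3, G20, G10, G6, G13, G23, G26, G16, G20, G18, G1, G19, G10, G9, G2, G11, G16, G23, G15, G10, G24, G12, G20, G21, G7, G14, G5, G25, G9, G23, G18, G16, G5, G26, G19, G15, G13, G7, G21, G11, G19, G11, G25, G7, G12, G14, G24, G5, G23, G16, G24, G19, G8, G11, G4, G12, G1, G2, G26, G20, G4, G13, G8, G10, G4, G8, G3, G11, G15, G6, G21, G19, G16, G23, G12, G9, G10, G24, G20, G18, G10, G20, G7, G8, G18, G5, G9, G4, G5, G7, G4, G3, G1, G8, G6, G2, G25, G14, G20, G2, G3, G10, G6, G1, G19, G11, G21, G14, G18, G15, G9, G25, G15, G21, G5, G11, G13, G7, G19, G26, G3, G6, G0]" by (simp add: Rc_def Aq_def ptsList_def dvg_def)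
  show ?thesis unfolding k r by (cases z) simp_all
qed

lemma chk_G1_G7: "Kc G1 G7 + length (filter (\<lambda>r. r = z) (Rc G1 G7)) \<le> 9"
proof -
  have k: "Kc G1 G7 = 0" by (simp add: Kc_def Aq_def ptsList_def)
  have r: "Rc G1 G7 = [G2, G1, G4, G8, G6, G3, G4, G19, G23, G12, G11, G8, G24, G16, G23, G1, G17, G15, G16, G2, G22, G21, G1, G21, G22, G23, G16, G17, G2, G15, G26, G8, G13, G4, G6, G11, G19, G3, G16, G22, G23, G17, G3, G7, G5, G6, G19, G23, G16, G11, G2, G25, G1, G14, G23, G4, G24, G11, G19, G12, G16, G8, G24, G12, G8, G15, G22, G4, G21, G17, G17, G8, G22, G4, G13, G18, G9, G26, G0, G0, G0, G0, G0, G0, G0, G0, G25, G6, G11, G17, G14, G3, G19, G22, G2, G1, G24, G9, G22, G17, G18, G12, G5, G25, G7, G14, G18, G16, G9, G23, G24, G1, G25, G26, G2, G12, G13, G14, G9, G18, G21, G11, G14, G15, G25, G19, G4, G8, G3, G5, G1, G7, G2, G6, G9, G18, G14, G15, G13, G25, G26, G21, G14, G25, G26, G8, G6, G13, G3, G4, G22, G17, G5, G25, G2, G7, G1, G14, G24, G12, G26, G19, G17, G13, G22, G11, G11, G19, G16, G12, G4, G23, G24, G8, G1, G2, G3, G23, G25, G6, G14, G16, G3, G6, G11, G5, G12, G19, G24, G7, G18, G9, G6, G24, G21, G3, G12, G15, G5, G7, G0]" by (simp add: Rc_def Aq_def ptsList_def dvg_def)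
  show ?thesis unfolding k r by (cases z) simp_all
qed

lemma chk_G1_G8: "Kc G1 G8 + length (filter (\<lambda>r. r = z) (Rc G1 G8)) \<le> 9"
proof -
  have k: "Kc G1 G8 = 0" by (simp add: Kc_def Aq_def ptsList_def)
  have r: "Rc G1 G8 = [G2, G1, G3, G6, G7, G5, G11, G10, G18, G1, G20, G19, G2, G9, G20, G18, G1, G19, G10, G9, G2, G11, G24, G3, G18, G15, G21, G9, G12, G6, G24, G18, G12, G9, G2, G22, G17, G1, G6, G23, G3, G16, G7, G12, G24, G5, G20, G9, G18, G10, G5, G8, G7, G4, G1, G21, G22, G23, G16, G17, G2, G15, G13, G26, G12, G17, G19, G24, G22, G11, G22, G4, G17, G8, G26, G9, G18, G13, G6, G10, G20, G3, G26, G16, G13, G23, G21, G12, G18, G3, G15, G24, G9, G6, G21, G15, G6, G11, G20, G10, G19, G3, G0, G0, G0, G0, G0, G0, G0, G0, G10, G12, G22, G7, G24, G20, G5, G17, G2, G1, G20, G21, G13, G10, G26, G15, G12, G24, G9, G15, G3, G21, G6, G18, G20, G10, G2, G4, G22, G1, G17, G8, G21, G15, G10, G23, G24, G20, G12, G16, G1, G2, G22, G5, G18, G17, G9, G7, G5, G7, G15, G12, G4, G21, G8, G24, G26, G13, G19, G21, G7, G11, G15, G5, G13, G26, G16, G17, G11, G23, G19, G22, G17, G22, G7, G23, G6, G5, G3, G16, G3, G6, G1, G4, G5, G2, G8, G7, G4, G8, G0]" by (simp add: Rc_def Aq_def ptsList_def dvg_def)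
  show ?thesis unfolding k r by (cases z) simp_all
qed

lemma chk_G1_G9: "Kc G1 G9 + length (filter (\<lambda>r. r = z) (Rc G1 G9)) \<le> 9"
proof -
  have k: "Kc G1 G9 = 0" by (simp add: Kc_def Aq_def ptsList_def)
  have r: "Rc G1 G9 = [G2, G1, G20, G10, G11, G19, G3, G21, G24, G9, G15, G6, G18, G12, G13, G19, G15, G7, G26, G11, G21, G5, G9, G19, G1, G10, G20, G2, G18, G11, G1, G22, G2, G17, G5, G14, G25, G7, G7, G6, G5, G3, G24, G11, G19, G12, G3, G20, G10, G6, G9, G7, G18, G5, G6, G22, G19, G25, G14, G11, G3, G17, G21, G15, G7, G4, G12, G5, G8, G24, G18, G14, G9, G25, G5, G23, G16, G7, G20, G9, G18, G10, G11, G2, G19, G1, G4, G21, G20, G14, G8, G15, G10, G25, G25, G14, G22, G7, G26, G13, G5, G17, G6, G19, G3, G11, G25, G17, G14, G22, G14, G4, G15, G10, G8, G25, G20, G21, G0, G0, G0, G0, G0, G0, G0, G0, G24, G12, G18, G21, G6, G15, G3, G9, G5, G7, G6, G12, G11, G3, G19, G24, G23, G16, G24, G18, G2, G12, G1, G9, G10, G20, G23, G24, G15, G16, G21, G12, G1, G2, G3, G20, G25, G6, G14, G10, G8, G4, G21, G10, G14, G15, G20, G25, G15, G21, G22, G8, G12, G17, G24, G4, G6, G3, G19, G7, G24, G11, G12, G5, G8, G4, G18, G26, G17, G9, G13, G22, G18, G9, G0]" by (simp add: Rc_def Aq_def ptsList_def dvg_def)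
  show ?thesis unfolding k r by (cases z) simp_all
qed

lemma chk_G1_G10: "Kc G1 G10 + length (filter (\<lambda>r. r = z) (Rc G1 G10)) \<le> 9"
proof -
  have k: "Kc G1 G10 = 0" by (simp add: Kc_def Aq_def ptsList_def)
  have r: "Rc G1 G10 = [G2, G1, G19, G11, G9, G18, G10, G12, G22, G7, G24, G20, G5, G17, G10, G9, G2, G11, G20, G18, G1, G19, G8, G1, G6, G5, G7, G3, G4, G2, G2, G17, G1, G22, G7, G25, G14, G5, G24, G7, G12, G5, G19, G25, G14, G11, G4, G15, G21, G8, G12, G17, G24, G22, G14, G12, G26, G1, G2, G13, G25, G24, G10, G20, G14, G3, G9, G25, G6, G18, G8, G10, G4, G20, G15, G14, G25, G21, G26, G19, G11, G13, G7, G15, G5, G21, G0, G0, G0, G0, G0, G0, G0, G0, G11, G19, G4, G6, G21, G15, G3, G8, G4, G3, G8, G6, G7, G1, G5, G2, G6, G15, G12, G18, G21, G3, G9, G24, G20, G10, G8, G13, G2, G4, G1, G26, G8, G4, G6, G7, G2, G5, G1, G3, G13, G26, G21, G1, G20, G15, G10, G2, G3, G6, G11, G15, G20, G19, G10, G21, G25, G14, G13, G4, G7, G26, G5, G8, G15, G21, G22, G13, G12, G17, G24, G26, G14, G25, G6, G19, G17, G3, G11, G22, G18, G9, G8, G20, G7, G4, G5, G10, G11, G19, G15, G25, G9, G21, G18, G14, G11, G19, G22, G3, G25, G17, G6, G14, G20, G10, G0]" by (simp add: Rc_def Aq_def ptsList_def dvg_def)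
  show ?thesis unfolding k r by (cases z) simp_all
qed

lemma chk_G1_G11: "Kc G1 G11 + length (filter (\<lambda>r. r = z) (Rc G1 G11)) \<le> 9"
proof -
  have k: "Kc G1 G11 = 0" by (simp add: Kc_def Aq_def ptsList_def)
  have r: "Rc G1 G11 = [G2, G1, G18, G9, G10, G20, G26, G3, G20, G23, G6, G13, G16, G10, G16, G2, G22, G21, G23, G1, G17, G15, G22, G10, G5, G24, G12, G7, G17, G20, G0, G0, G0, G0, G0, G0, G0, G0, G17, G8, G22, G4, G23, G3, G6, G16, G5, G4, G8, G7, G15, G24, G21, G12, G19, G5, G21, G13, G26, G15, G11, G7, G8, G4, G18, G5, G15, G9, G7, G21, G13, G15, G26, G21, G19, G5, G7, G11, G23, G2, G1, G16, G21, G22, G15, G17, G8, G15, G10, G25, G4, G21, G20, G14, G3, G6, G13, G8, G19, G11, G4, G26, G2, G17, G1, G22, G16, G21, G23, G15, G19, G20, G9, G2, G10, G11, G1, G18, G10, G20, G4, G26, G1, G8, G2, G13, G16, G23, G12, G11, G4, G19, G8, G24, G21, G15, G9, G26, G2, G18, G1, G13, G13, G26, G4, G3, G11, G8, G19, G6, G4, G8, G3, G11, G26, G6, G13, G19, G23, G16, G14, G6, G2, G25, G1, G3, G20, G10, G9, G1, G11, G18, G2, G19, G3, G6, G9, G14, G20, G18, G10, G25, G22, G17, G5, G16, G3, G7, G6, G23, G23, G16, G26, G10, G6, G13, G20, G3, G19, G11, G0]" by (simp add: Rc_def Aq_def ptsList_def dvg_def)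
  show ?thesis unfolding k r by (cases z) simp_all
qed

lemma chk_G1_G12: "Kc G1 G12 + length (filter (\<lambda>r. r = z) (Rc G1 G12)) \<le> 9"
proof -
  have k: "Kc G1 G12 = 0" by (simp add: Kc_def Aq_def ptsList_def)
  have r: "Rc G1 G12 = [G2, G1, G26, G13, G14, G25, G19, G20, G9, G2, G10, G11, G1, G18, G4, G21, G20, G14, G8, G15, G10, G25, G5, G23, G25, G18, G9, G14, G7, G16, G4, G3, G8, G6, G11, G21, G15, G19, G0, G0, G0, G0, G0, G0, G0, G0, G6, G10, G20, G3, G18, G5, G9, G7, G25, G24, G13, G2, G1, G26, G14, G12, G14, G25, G23, G1, G3, G16, G2, G6, G10, G2, G20, G1, G9, G19, G11, G18, G11, G16, G23, G19, G4, G24, G8, G12, G19, G16, G24, G4, G11, G23, G12, G8, G6, G3, G26, G4, G11, G19, G8, G13, G18, G2, G9, G1, G20, G19, G10, G11, G22, G14, G6, G11, G25, G17, G19, G3, G5, G7, G24, G16, G6, G12, G3, G23, G25, G14, G13, G1, G12, G2, G24, G26, G3, G6, G23, G5, G12, G16, G24, G7, G18, G9, G2, G17, G7, G1, G5, G22, G5, G7, G25, G13, G17, G14, G22, G26, G20, G10, G5, G4, G9, G7, G18, G8, G18, G9, G7, G14, G23, G5, G25, G16, G19, G11, G2, G13, G23, G1, G16, G26, G16, G23, G12, G3, G5, G24, G7, G6, G9, G18, G3, G12, G15, G6, G24, G21, G24, G12, G0]" by (simp add: Rc_def Aq_def ptsList_def dvg_def)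
  show ?thesis unfolding k r by (cases z) simp_all
qed

lemma chk_G1_G13: "Kc G1 G13 + length (filter (\<lambda>r. r = z) (Rc G1 G13)) \<le> 9"
proof -
  have k: "Kc G1 G13 = 0" by (simp add: Kc_def Aq_def ptsList_def)
  have r: "Rc G1 G13 = [G2, G1, G25, G14, G12, G24, G8, G11, G16, G24, G19, G4, G12, G23, G1, G14, G13, G24, G2, G25, G26, G12, G19, G5, G21, G13, G26, G15, G11, G7, G5, G25, G7, G14, G13, G8, G4, G26, G20, G1, G10, G2, G4, G17, G22, G8, G7, G8, G4, G5, G21, G12, G15, G24, G3, G17, G11, G14, G25, G19, G6, G22, G0, G0, G0, G0, G0, G0, G0, G0, G24, G7, G12, G5, G22, G10, G20, G17, G17, G26, G13, G22, G18, G4, G9, G8, G24, G22, G7, G20, G12, G17, G5, G10, G19, G11, G8, G3, G15, G21, G6, G4, G25, G13, G14, G26, G2, G12, G1, G24, G17, G25, G3, G19, G14, G22, G11, G6, G22, G17, G23, G20, G8, G16, G4, G10, G6, G3, G19, G14, G17, G25, G22, G11, G14, G25, G11, G18, G21, G19, G15, G9, G1, G2, G22, G5, G25, G17, G14, G7, G11, G19, G15, G20, G6, G21, G3, G10, G7, G5, G21, G24, G8, G15, G4, G12, G6, G3, G10, G23, G26, G20, G16, G13, G4, G8, G12, G7, G15, G24, G21, G5, G18, G9, G2, G21, G26, G1, G13, G15, G21, G15, G7, G19, G26, G5, G11, G13, G26, G13, G0]" by (simp add: Rc_def Aq_def ptsList_def dvg_def)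
  show ?thesis unfolding k r by (cases z) simp_all
qed

lemma chk_G1_G14: "Kc G1 G14 + length (filter (\<lambda>r. r = z) (Rc G1 G14)) \<le> 9"
proof -
  have k: "Kc G1 G14 = 0" by (simp add: Kc_def Aq_def ptsList_def)
  have r: "Rc G1 G14 = [G2, G1, G24, G12, G13, G26, G12, G2, G14, G13, G1, G24, G26, G25, G7, G4, G6, G1, G5, G8, G3, G2, G15, G14, G20, G8, G4, G10, G21, G25, G3, G11, G6, G19, G15, G10, G20, G21, G10, G2, G20, G1, G8, G22, G17, G4, G8, G21, G15, G4, G24, G22, G12, G17, G11, G7, G15, G26, G13, G21, G19, G5, G25, G14, G16, G2, G6, G23, G1, G3, G5, G3, G7, G6, G8, G1, G2, G4, G14, G6, G3, G25, G17, G11, G22, G19, G23, G1, G17, G15, G16, G2, G22, G21, G14, G25, G17, G5, G13, G26, G7, G22, G23, G24, G16, G12, G11, G8, G19, G4, G0, G0, G0, G0, G0, G0, G0, G0, G12, G24, G19, G3, G7, G11, G5, G6, G17, G22, G7, G24, G10, G12, G20, G5, G22, G17, G8, G16, G3, G4, G6, G23, G11, G19, G15, G20, G16, G21, G23, G10, G26, G13, G8, G6, G25, G4, G14, G3, G12, G24, G13, G11, G22, G26, G17, G19, G12, G24, G22, G5, G20, G17, G7, G10, G16, G23, G25, G19, G1, G14, G2, G11, G5, G7, G25, G12, G11, G14, G19, G24, G6, G3, G2, G8, G7, G1, G4, G5, G25, G14, G0]" by (simp add: Rc_def Aq_def ptsList_def dvg_def)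
  show ?thesis unfolding k r by (cases z) simp_all
qed

lemma chk_G1_G15: "Kc G1 G15 + length (filter (\<lambda>r. r = z) (Rc G1 G15)) \<le> 9"
proof -
  have k: "Kc G1 G15 = 0" by (simp add: Kc_def Aq_def ptsList_def)
  have r: "Rc G1 G15 = [G2, G1, G23, G16, G17, G22, G17, G25, G3, G19, G14, G22, G11, G6, G22, G26, G4, G18, G17, G13, G8, G9, G25, G24, G13, G2, G1, G26, G14, G12, G7, G14, G5, G25, G26, G4, G8, G13, G5, G3, G7, G6, G12, G19, G11, G24, G0, G0, G0, G0, G0, G0, G0, G0, G17, G20, G7, G12, G24, G5, G22, G10, G4, G8, G9, G7, G21, G18, G5, G15, G2, G26, G1, G13, G25, G24, G12, G14, G2, G14, G25, G1, G24, G13, G12, G26, G16, G2, G22, G21, G23, G1, G17, G15, G17, G22, G18, G1, G5, G7, G2, G9, G12, G9, G24, G18, G21, G3, G15, G6, G3, G21, G24, G9, G15, G6, G18, G12, G7, G5, G12, G23, G3, G24, G6, G16, G26, G13, G8, G17, G18, G22, G9, G4, G4, G8, G10, G22, G16, G20, G23, G17, G25, G14, G13, G4, G3, G26, G6, G8, G24, G12, G18, G2, G16, G9, G23, G1, G9, G18, G4, G15, G5, G8, G7, G21, G13, G26, G11, G15, G5, G19, G21, G7, G5, G7, G15, G18, G4, G21, G8, G9, G26, G13, G8, G2, G10, G4, G20, G1, G22, G17, G15, G1, G16, G21, G2, G23, G21, G15, G0]" by (simp add: Rc_def Aq_def ptsList_def dvg_def)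
  show ?thesis unfolding k r by (cases z) simp_all
qed

lemma chk_G1_G16: "Kc G1 G16 + length (filter (\<lambda>r. r = z) (Rc G1 G16)) \<le> 9"
proof -
  have k: "Kc G1 G16 = 0" by (simp add: Kc_def Aq_def ptsList_def)
  have r: "Rc G1 G16 = [G2, G1, G22, G17, G15, G21, G21, G16, G1, G17, G23, G15, G22, G2, G19, G16, G24, G4, G11, G23, G12, G8, G12, G6, G9, G21, G15, G18, G24, G3, G8, G6, G4, G3, G19, G15, G21, G11, G22, G4, G17, G8, G16, G6, G3, G23, G1, G25, G14, G2, G3, G10, G6, G20, G22, G10, G5, G24, G12, G7, G17, G20, G20, G10, G25, G6, G18, G14, G3, G9, G16, G22, G23, G17, G2, G15, G21, G1, G8, G21, G15, G4, G14, G20, G25, G10, G12, G17, G5, G10, G24, G22, G7, G20, G0, G0, G0, G0, G0, G0, G0, G0, G10, G23, G20, G16, G3, G26, G6, G13, G25, G8, G21, G20, G4, G14, G10, G15, G24, G12, G11, G6, G5, G19, G7, G3, G7, G5, G14, G18, G23, G9, G16, G25, G12, G24, G7, G11, G25, G5, G14, G19, G8, G4, G6, G19, G21, G3, G15, G11, G3, G6, G11, G15, G8, G19, G4, G21, G26, G13, G23, G2, G19, G16, G11, G1, G19, G11, G23, G24, G8, G16, G12, G4, G17, G22, G19, G12, G26, G11, G13, G24, G1, G2, G22, G20, G4, G17, G8, G10, G7, G5, G10, G17, G24, G20, G22, G12, G23, G16, G0]" by (simp add: Rc_def Aq_def ptsList_def dvg_def)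
  show ?thesis unfolding k r by (cases z) simp_all
qed

lemma chk_G1_G17: "Kc G1 G17 + length (filter (\<lambda>r. r = z) (Rc G1 G17)) \<le> 9"
proof -
  have k: "Kc G1 G17 = 0" by (simp add: Kc_def Aq_def ptsList_def)
  have r: "Rc G1 G17 = [G2, G1, G21, G15, G16, G23, G1, G7, G8, G3, G5, G2, G6, G4, G25, G6, G11, G17, G14, G3, G19, G22, G2, G15, G17, G16, G23, G22, G1, G21, G6, G19, G3, G11, G21, G20, G10, G15, G12, G5, G24, G7, G11, G14, G25, G19, G2, G14, G25, G1, G6, G20, G3, G10, G0, G0, G0, G0, G0, G0, G0, G0, G15, G21, G5, G8, G24, G7, G4, G12, G21, G18, G15, G9, G12, G6, G3, G24, G5, G4, G8, G7, G1, G6, G2, G3, G11, G23, G12, G8, G19, G16, G24, G4, G22, G17, G9, G2, G7, G5, G1, G18, G17, G7, G22, G5, G12, G10, G24, G20, G11, G10, G18, G1, G20, G19, G2, G9, G17, G22, G16, G10, G4, G23, G8, G20, G15, G21, G20, G4, G25, G8, G14, G10, G23, G16, G22, G6, G7, G17, G5, G3, G15, G21, G20, G16, G12, G10, G24, G23, G9, G18, G1, G22, G24, G2, G12, G17, G4, G8, G12, G22, G15, G24, G21, G17, G7, G5, G8, G6, G2, G4, G3, G1, G20, G10, G5, G6, G9, G7, G18, G3, G12, G24, G9, G11, G25, G18, G14, G19, G10, G20, G14, G21, G8, G25, G15, G4, G22, G17, G0]" by (simp add: Rc_def Aq_def ptsList_def dvg_def)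
  show ?thesis unfolding k r by (cases z) simp_all
qed

lemma chk_G1_G18: "Kc G1 G18 + length (filter (\<lambda>r. r = z) (Rc G1 G18)) \<le> 9"
proof -
  have k: "Kc G1 G18 = 0" by (simp add: Kc_def Aq_def ptsList_def)
  have r: "Rc G1 G18 = [G2, G1, G11, G19, G20, G10, G23, G9, G5, G14, G18, G16, G25, G7, G9, G7, G25, G23, G18, G5, G14, G16, G23, G4, G24, G11, G19, G12, G16, G8, G10, G23, G20, G16, G24, G9, G18, G12, G13, G15, G26, G21, G1, G10, G20, G2, G12, G22, G17, G24, G13, G19, G26, G11, G8, G1, G6, G5, G7, G3, G4, G2, G26, G13, G24, G22, G11, G12, G17, G19, G20, G1, G10, G2, G18, G11, G19, G9, G25, G3, G6, G14, G22, G19, G17, G11, G18, G5, G14, G16, G9, G7, G25, G23, G26, G13, G7, G25, G4, G8, G14, G5, G14, G26, G25, G13, G1, G24, G2, G12, G12, G2, G14, G13, G1, G24, G26, G25, G15, G21, G26, G25, G18, G13, G9, G14, G18, G9, G2, G10, G19, G20, G11, G1, G8, G4, G20, G17, G23, G10, G16, G22, G17, G22, G7, G14, G26, G5, G13, G25, G18, G9, G2, G17, G12, G1, G24, G22, G0, G0, G0, G0, G0, G0, G0, G0, G16, G23, G1, G22, G15, G2, G17, G21, G22, G17, G11, G24, G13, G19, G26, G12, G4, G8, G3, G22, G16, G6, G23, G17, G12, G24, G4, G16, G11, G8, G23, G19, G9, G18, G0]" by (simp add: Rc_def Aq_def ptsList_def dvg_def)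
  show ?thesis unfolding k r by (cases z) simp_all
qed

lemma chk_G1_G19: "Kc G1 G19 + length (filter (\<lambda>r. r = z) (Rc G1 G19)) \<le> 9"
proof -
  have k: "Kc G1 G19 = 0" by (simp add: Kc_def Aq_def ptsList_def)
  have r: "Rc G1 G19 = [G2, G1, G10, G20, G18, G9, G0, G0, G0, G0, G0, G0, G0, G0, G15, G24, G9, G6, G21, G12, G18, G3, G10, G13, G23, G3, G6, G16, G20, G26, G11, G15, G19, G21, G20, G23, G16, G10, G3, G16, G6, G23, G5, G24, G12, G7, G13, G11, G19, G26, G16, G2, G23, G1, G13, G18, G4, G17, G22, G8, G26, G9, G12, G24, G4, G21, G17, G8, G15, G22, G7, G6, G5, G3, G4, G2, G1, G8, G22, G13, G26, G17, G9, G8, G18, G4, G26, G11, G21, G5, G13, G19, G15, G7, G9, G18, G16, G24, G2, G1, G12, G23, G9, G1, G18, G2, G10, G11, G20, G19, G7, G13, G11, G21, G26, G5, G15, G19, G8, G4, G22, G2, G20, G17, G10, G1, G2, G1, G17, G23, G21, G16, G15, G22, G16, G23, G17, G3, G5, G22, G7, G6, G24, G12, G18, G2, G17, G9, G22, G1, G6, G3, G19, G21, G4, G11, G8, G15, G17, G22, G19, G23, G26, G11, G13, G16, G22, G17, G13, G4, G9, G26, G8, G18, G7, G5, G21, G9, G8, G15, G4, G18, G15, G21, G20, G13, G1, G10, G2, G26, G24, G12, G8, G23, G19, G4, G16, G11, G11, G19, G0]" by (simp add: Rc_def Aq_def ptsList_def dvg_def)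
  show ?thesis unfolding k r by (cases z) simp_all
qed

lemma chk_G1_G20: "Kc G1 G20 + length (filter (\<lambda>r. r = z) (Rc G1 G20)) \<le> 9"
proof -
  have k: "Kc G1 G20 = 0" by (simp add: Kc_def Aq_def ptsList_def)
  have r: "Rc G1 G20 = [G2, G1, G9, G18, G19, G11, G16, G18, G7, G25, G9, G23, G14, G5, G12, G17, G5, G10, G24, G22, G7, G20, G6, G22, G19, G25, G14, G11, G3, G17, G9, G1, G18, G2, G22, G7, G5, G17, G23, G17, G16, G22, G6, G5, G7, G3, G14, G6, G3, G25, G10, G9, G20, G18, G18, G11, G2, G20, G10, G1, G9, G19, G1, G2, G11, G23, G14, G19, G16, G25, G12, G5, G24, G7, G17, G20, G10, G22, G19, G23, G16, G11, G8, G12, G4, G24, G22, G26, G4, G18, G17, G13, G8, G9, G4, G8, G25, G26, G6, G3, G13, G14, G16, G12, G23, G24, G19, G4, G11, G8, G20, G24, G17, G5, G12, G10, G7, G22, G25, G14, G18, G12, G19, G9, G11, G24, G10, G20, G23, G6, G26, G3, G13, G16, G24, G12, G5, G19, G14, G7, G25, G11, G7, G5, G14, G26, G8, G25, G4, G13, G12, G24, G9, G1, G23, G18, G16, G2, G22, G17, G11, G16, G13, G19, G26, G23, G1, G2, G25, G13, G12, G14, G26, G24, G10, G20, G7, G3, G18, G5, G9, G6, G20, G10, G16, G4, G22, G23, G17, G8, G0, G0, G0, G0, G0, G0, G0, G0, G10, G20, G0]" by (simp add: Rc_def Aq_def ptsList_def dvg_def)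
  show ?thesis unfolding k r by (cases z) simp_all
qed

lemma chk_G1_G21: "Kc G1 G21 + length (filter (\<lambda>r. r = z) (Rc G1 G21)) \<le> 9"
proof -
  have k: "Kc G1 G21 = 0" by (simp add: Kc_def Aq_def ptsList_def)
  have r: "Rc G1 G21 = [G2, G1, G17, G22, G23, G16, G9, G17, G26, G4, G22, G18, G8, G13, G0, G0, G0, G0, G0, G0, G0, G0, G16, G8, G12, G19, G11, G24, G23, G4, G13, G4, G26, G8, G3, G19, G11, G6, G15, G9, G21, G18, G13, G2, G1, G26, G15, G12, G24, G21, G22, G26, G17, G13, G24, G3, G18, G15, G21, G9, G12, G6, G16, G23, G13, G19, G2, G26, G11, G1, G9, G25, G18, G14, G7, G16, G23, G5, G16, G1, G2, G23, G15, G17, G21, G22, G15, G24, G9, G6, G21, G12, G18, G3, G7, G5, G2, G22, G25, G14, G17, G1, G8, G6, G4, G3, G5, G2, G7, G1, G23, G9, G5, G14, G18, G16, G25, G7, G11, G19, G14, G5, G24, G25, G12, G7, G19, G11, G21, G26, G7, G13, G5, G15, G6, G3, G16, G7, G24, G23, G12, G5, G12, G24, G9, G1, G22, G18, G17, G2, G13, G26, G4, G3, G14, G8, G25, G6, G19, G11, G2, G14, G23, G1, G16, G25, G2, G1, G14, G26, G24, G25, G13, G12, G8, G4, G24, G5, G21, G12, G15, G7, G14, G25, G26, G18, G21, G13, G15, G9, G25, G14, G16, G5, G9, G23, G7, G18, G15, G21, G0]" by (simp add: Rc_def Aq_def ptsList_def dvg_def)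
  show ?thesis unfolding k r by (cases z) simp_all
qed

lemma chk_G1_G22: "Kc G1 G22 + length (filter (\<lambda>r. r = z) (Rc G1 G22)) \<le> 9"
proof -
  have k: "Kc G1 G22 = 0" by (simp add: Kc_def Aq_def ptsList_def)
  have r: "Rc G1 G22 = [G2, G1, G16, G23, G21, G15, G25, G8, G21, G20, G4, G14, G10, G15, G6, G20, G23, G13, G3, G10, G16, G26, G3, G17, G11, G14, G25, G19, G6, G22, G14, G26, G25, G13, G8, G3, G6, G4, G8, G10, G4, G20, G17, G16, G23, G22, G16, G1, G2, G23, G25, G6, G14, G3, G5, G23, G25, G18, G9, G14, G7, G16, G5, G7, G20, G18, G8, G10, G9, G4, G26, G21, G13, G15, G11, G7, G5, G19, G13, G11, G19, G26, G5, G21, G7, G15, G14, G3, G19, G22, G25, G6, G11, G17, G20, G10, G11, G21, G23, G16, G15, G19, G3, G11, G6, G19, G14, G22, G25, G17, G15, G23, G2, G22, G16, G21, G17, G1, G1, G2, G10, G15, G26, G20, G13, G21, G0, G0, G0, G0, G0, G0, G0, G0, G17, G22, G4, G23, G6, G8, G3, G16, G22, G17, G5, G25, G13, G7, G26, G14, G19, G11, G21, G10, G3, G15, G6, G20, G6, G3, G18, G7, G10, G9, G20, G5, G17, G22, G26, G8, G18, G13, G4, G9, G11, G19, G1, G26, G16, G2, G23, G13, G25, G14, G13, G9, G15, G26, G21, G18, G1, G2, G11, G9, G20, G19, G18, G10, G17, G22, G0]" by (simp add: Rc_def Aq_def ptsList_def dvg_def)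
  show ?thesis unfolding k r by (cases z) simp_all
qed

lemma chk_G1_G23: "Kc G1 G23 + length (filter (\<lambda>r. r = z) (Rc G1 G23)) \<le> 9"
proof -
  have k: "Kc G1 G23 = 0" by (simp add: Kc_def Aq_def ptsList_def)
  have r: "Rc G1 G23 = [G2, G1, G15, G21, G22, G17, G5, G26, G19, G15, G13, G7, G21, G11, G3, G10, G16, G26, G6, G20, G23, G13, G20, G26, G16, G6, G3, G23, G10, G13, G12, G9, G24, G18, G1, G17, G22, G2, G25, G11, G14, G19, G9, G21, G15, G18, G17, G26, G13, G22, G19, G16, G11, G23, G10, G13, G23, G3, G6, G16, G20, G26, G18, G9, G6, G20, G5, G3, G10, G7, G4, G20, G8, G10, G21, G25, G14, G15, G10, G18, G9, G20, G19, G1, G11, G2, G10, G9, G2, G11, G20, G18, G1, G19, G12, G24, G20, G23, G18, G9, G16, G10, G1, G22, G2, G17, G23, G15, G16, G21, G1, G7, G8, G3, G5, G2, G6, G4, G18, G9, G15, G19, G25, G21, G14, G11, G11, G19, G15, G13, G5, G26, G7, G21, G25, G14, G19, G9, G15, G11, G21, G18, G5, G7, G25, G13, G4, G14, G8, G26, G7, G5, G14, G26, G22, G25, G17, G13, G14, G25, G10, G18, G6, G20, G3, G9, G23, G16, G2, G17, G21, G1, G22, G15, G23, G16, G14, G11, G2, G25, G1, G19, G0, G0, G0, G0, G0, G0, G0, G0, G13, G26, G12, G25, G1, G24, G14, G2, G16, G23, G0]" by (simp add: Rc_def Aq_def ptsList_def dvg_def)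
  show ?thesis unfolding k r by (cases z) simp_all
qed

lemma chk_G1_G24: "Kc G1 G24 + length (filter (\<lambda>r. r = z) (Rc G1 G24)) \<le> 9"
proof -
  have k: "Kc G1 G24 = 0" by (simp add: Kc_def Aq_def ptsList_def)
  have r: "Rc G1 G24 = [G2, G1, G14, G25, G26, G13, G7, G13, G11, G21, G26, G5, G15, G19, G18, G5, G14, G16, G9, G7, G25, G23, G0, G0, G0, G0, G0, G0, G0, G0, G16, G12, G23, G24, G9, G2, G1, G18, G11, G12, G19, G24, G25, G18, G9, G14, G9, G5, G7, G18, G4, G21, G8, G15, G16, G8, G12, G19, G11, G24, G23, G4, G6, G3, G2, G25, G20, G1, G14, G10, G1, G13, G2, G26, G14, G12, G24, G25, G7, G8, G4, G5, G2, G3, G1, G6, G3, G10, G16, G26, G6, G20, G23, G13, G15, G21, G3, G19, G10, G20, G11, G6, G20, G16, G10, G23, G6, G13, G3, G26, G4, G19, G23, G12, G11, G8, G24, G16, G13, G26, G2, G9, G21, G1, G15, G18, G20, G10, G16, G3, G13, G6, G26, G23, G7, G5, G3, G24, G19, G6, G11, G12, G10, G20, G23, G24, G18, G16, G9, G12, G8, G4, G6, G19, G13, G3, G26, G11, G11, G19, G1, G25, G16, G2, G23, G14, G21, G15, G24, G18, G6, G12, G9, G3, G9, G18, G4, G10, G5, G8, G7, G20, G21, G15, G10, G26, G2, G20, G1, G13, G2, G1, G19, G18, G10, G11, G9, G20, G12, G24, G0]" by (simp add: Rc_def Aq_def ptsList_def dvg_def)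
  show ?thesis unfolding k r by (cases z) simp_all
qed

lemma chk_G1_G25: "Kc G1 G25 + length (filter (\<lambda>r. r = z) (Rc G1 G25)) \<le> 9"
proof -
  have k: "Kc G1 G25 = 0" by (simp add: Kc_def Aq_def ptsList_def)
  have r: "Rc G1 G25 = [G2, G1, G13, G26, G24, G12, G14, G4, G15, G10, G8, G25, G20, G21, G24, G22, G7, G20, G12, G17, G5, G10, G26, G9, G8, G22, G17, G4, G13, G18, G17, G7, G22, G5, G14, G13, G26, G25, G1, G13, G2, G26, G20, G8, G4, G10, G10, G18, G9, G20, G7, G4, G5, G8, G21, G25, G10, G4, G8, G20, G15, G14, G22, G17, G15, G24, G26, G21, G12, G13, G15, G9, G21, G18, G24, G3, G6, G12, G4, G15, G21, G8, G25, G10, G14, G20, G2, G25, G26, G12, G1, G14, G13, G24, G1, G2, G12, G18, G17, G22, G9, G24, G24, G18, G12, G9, G15, G6, G21, G3, G26, G3, G20, G23, G6, G13, G16, G10, G3, G6, G7, G22, G23, G5, G16, G17, G1, G2, G22, G16, G15, G23, G21, G17, G15, G21, G18, G13, G1, G9, G2, G26, G20, G10, G16, G12, G9, G23, G18, G24, G14, G25, G26, G8, G5, G13, G7, G4, G25, G14, G20, G9, G3, G10, G6, G18, G0, G0, G0, G0, G0, G0, G0, G0, G21, G15, G17, G4, G24, G22, G12, G8, G8, G4, G6, G17, G23, G3, G16, G22, G14, G25, G23, G7, G18, G16, G5, G9, G14, G25, G0]" by (simp add: Rc_def Aq_def ptsList_def dvg_def)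
  show ?thesis unfolding k r by (cases z) simp_all
qed

lemma chk_G1_G26: "Kc G1 G26 + length (filter (\<lambda>r. r = z) (Rc G1 G26)) \<le> 9"
proof -
  have k: "Kc G1 G26 = 0" by (simp add: Kc_def Aq_def ptsList_def)
  have r: "Rc G1 G26 = [G2, G1, G12, G24, G25, G14, G18, G22, G13, G8, G17, G9, G4, G26, G21, G12, G18, G3, G15, G24, G9, G6, G13, G18, G4, G17, G22, G8, G26, G9, G15, G20, G21, G10, G16, G24, G12, G23, G18, G14, G9, G25, G21, G13, G26, G15, G11, G16, G23, G19, G1, G14, G2, G25, G2, G15, G17, G16, G23, G22, G1, G21, G11, G19, G22, G26, G23, G17, G13, G16, G23, G17, G16, G22, G1, G21, G15, G2, G1, G25, G14, G2, G12, G26, G24, G13, G7, G4, G6, G1, G5, G8, G3, G2, G23, G16, G21, G20, G12, G24, G10, G15, G22, G5, G17, G7, G24, G20, G12, G10, G9, G17, G26, G4, G22, G18, G8, G13, G23, G16, G3, G8, G22, G6, G17, G4, G9, G18, G1, G20, G11, G10, G19, G2, G26, G13, G15, G2, G10, G21, G20, G1, G0, G0, G0, G0, G0, G0, G0, G0, G20, G10, G16, G12, G21, G23, G15, G24, G3, G6, G9, G5, G20, G18, G10, G7, G15, G21, G12, G9, G3, G24, G18, G6, G6, G3, G18, G25, G10, G9, G20, G14, G10, G20, G23, G8, G17, G16, G22, G4, G26, G13, G24, G14, G2, G12, G25, G1, G13, G26, G0]" by (simp add: Rc_def Aq_def ptsList_def dvg_def)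
  show ?thesis unfolding k r by (cases z) simp_all
qed

lemma chk_G0_G1: "Kc G0 G1 + length (filter (\<lambda>r. r = z) (Rc G0 G1)) \<le> 9"
proof -
  have k: "Kc G0 G1 = 0" by (simp add: Kc_def Aq_def ptsList_def)
  have r: "Rc G0 G1 = [G0, G0, G2, G1, G1, G2, G16, G18, G7, G25, G9, G23, G14, G5, G6, G20, G23, G13, G3, G10, G16, G26, G26, G9, G8, G22, G17, G4, G13, G18, G1, G22, G2, G17, G5, G14, G25, G7, G20, G1, G10, G2, G4, G17, G22, G8, G1, G25, G14, G2, G3, G10, G6, G20, G17, G20, G7, G12, G24, G5, G22, G10, G25, G14, G16, G2, G6, G23, G1, G3, G17, G8, G22, G4, G13, G18, G9, G26, G6, G10, G20, G3, G26, G16, G13, G23, G8, G15, G10, G25, G4, G21, G20, G14, G22, G17, G9, G2, G7, G5, G1, G18, G7, G14, G5, G25, G9, G23, G18, G16, G22, G14, G6, G11, G25, G17, G19, G3, G20, G10, G8, G13, G2, G4, G1, G26, G11, G19, G15, G13, G5, G26, G7, G21, G11, G19, G24, G25, G9, G12, G18, G14, G10, G20, G23, G24, G18, G16, G9, G12, G15, G21, G20, G16, G19, G10, G11, G23, G17, G22, G19, G23, G26, G11, G13, G16, G15, G21, G12, G9, G3, G24, G18, G6, G12, G24, G13, G21, G22, G26, G17, G15, G14, G25, G26, G18, G21, G13, G15, G9, G12, G24, G4, G16, G11, G8, G23, G19, G2, G1, G0]" by (simp add: Rc_def Aq_def ptsList_def dvg_def)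
  show ?thesis unfolding k r by (cases z) simp_all
qed

lemma mug_G0r: "mug z G0 = G0" by (cases z) simp_all
lemma adg_G0r: "adg a G0 = a" by (cases a) simp_all
lemma mug_ivg: "c \<noteq> G0 \<Longrightarrow> mug c (ivg c) = G1" by (cases c) simp_all

lemma split_len: "length (filter P xs) = length (filter (\<lambda>p. Q p \<and> P p) xs) + length (filter (\<lambda>p. \<not> Q p \<and> P p) xs)"
  by (induct xs) auto

lemma gf_solve:
  fixes \<alpha> :: "'a::field"
  assumes h3: "(3::'a) = 0" and ha: "\<alpha>^3 = \<alpha> + 1" and c: "c \<noteq> G0"
  shows "adg a (mug z c) = G0 \<longleftrightarrow> z = dvg (ng a) c"
proof -
  have inj: "inj (phi \<alpha>)" by (rule phi_inj[OF h3 ha])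
  have pc: "phi \<alpha> c \<noteq> 0" using phi_zero[OF h3 ha] c by blast
  have pneg: "phi \<alpha> (ng a) = - phi \<alpha> a"
  proof -
    have "phi \<alpha> a + phi \<alpha> (ng a) = phi \<alpha> (adg a (ng a))" by (simp add: phi_add[OF h3])
    also have "\<dots> = 0" by (simp add: ad_ng phi_G0)
    finally have "phi \<alpha> a + phi \<alpha> (ng a) = 0" .
    thus ?thesis by (simp add: eq_neg_iff_add_eq_0 add.commute)
  qed
  have pinv: "phi \<alpha> (ivg c) = 1 / phi \<alpha> c"
  proof -
    have "phi \<alpha> c * phi \<alpha> (ivg c) = phi \<alpha> (mug c (ivg c))" by (simp add: phi_mul[OF h3 ha])
    also have "\<dots> = 1" by (simp add: mug_ivg[OF c] phi_G1)
    finally have "phi \<alpha> c * phi \<alpha> (ivg c) = 1" .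
    thus ?thesis using pc by (simp add: field_simps)
  qed
  have "adg a (mug z c) = G0 \<longleftrightarrow> phi \<alpha> (adg a (mug z c)) = 0"
    using phi_zero[OF h3 ha] by blast
  also have "\<dots> \<longleftrightarrow> phi \<alpha> a + phi \<alpha> z * phi \<alpha> c = 0"
    by (simp add: phi_add[OF h3] phi_mul[OF h3 ha])
  also have "\<dots> \<longleftrightarrow> phi \<alpha> z * phi \<alpha> c = - phi \<alpha> a"
    by (simp add: eq_neg_iff_add_eq_0 add.commute)
  also have "\<dots> \<longleftrightarrow> phi \<alpha> z = - phi \<alpha> a / phi \<alpha> c"
    using pc by (metis eq_divide_eq)
  also have "\<dots> \<longleftrightarrow> phi \<alpha> z = phi \<alpha> (dvg (ng a) c)"
    by (simp add: dvg_def phi_mul[OF h3 ha] pneg pinv)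
  also have "\<dots> \<longleftrightarrow> z = dvg (ng a) c" using inj by (auto dest: injD)
  finally show ?thesis .
qed

lemma cnt_eq:
  fixes \<alpha> :: "'a::field"
  assumes h3: "(3::'a) = 0" and ha: "\<alpha>^3 = \<alpha> + 1"
  shows "cnt (x, y, z) = Kc x y + length (filter (\<lambda>r. r = z) (Rc x y))"
proof -
  let ?P = "\<lambda>p. dotg (x,y,z) p = G0"
  let ?Q = "\<lambda>p. snd (snd p) = G0"
  have d: "dotg (x,y,z) p = adg (Aq x y p) (mug z (snd (snd p)))" for p
    by (simp add: dotg_def Aq_def)
  have "cnt (x,y,z) = length (filter (\<lambda>p. ?Q p \<and> ?P p) ptsList) + length (filter (\<lambda>p. \<not> ?Q p \<and> ?P p) ptsList)"
    unfolding cnt_def by (rule split_len)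
  moreover have "filter (\<lambda>p. ?Q p \<and> ?P p) ptsList = filter (\<lambda>p. snd (snd p) = G0 \<and> Aq x y p = G0) ptsList"
    by (rule filter_cong) (auto simp: d mug_G0r adg_G0r)
  moreover have "filter (\<lambda>p. \<not> ?Q p \<and> ?P p) ptsList = filter (\<lambda>p. snd (snd p) \<noteq> G0 \<and> dvg (ng (Aq x y p)) (snd (snd p)) = z) ptsList"
    by (rule filter_cong) (auto simp: d gf_solve[OF h3 ha])
  moreover have "length (filter (\<lambda>r. r = z) (Rc x y)) = length (filter (\<lambda>p. snd (snd p) \<noteq> G0 \<and> dvg (ng (Aq x y p)) (snd (snd p)) = z) ptsList)"
    unfolding Rc_def by (simp add: filter_map filter_filter comp_def conj_commute)
  ultimately show ?thesis unfolding Kc_def by simp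
qed

lemma cnt_last: "cnt (G0, G0, G1) \<le> 9"
  by (simp add: cnt_def ptsList_def dotg_def)

lemma cnt9: "cnt (G1, G0, G1) = 9"
  by (simp add: cnt_def ptsList_def dotg_def)

lemma cnt_all:
  fixes \<alpha> :: "'a::field"
  assumes h3: "(3::'a) = 0" and ha: "\<alpha>^3 = \<alpha> + 1" and m: "m \<in> set linesList"
  shows "cnt m \<le> 9"
proof -
  have "m \<in> {(G1, y, z) | y z. True} \<or> m \<in> {(G0, G1, z) | z. True} \<or> m = (G0, G0, G1)"
    using m unfolding linesList_def by auto
  moreover have "cnt (G1, y, z) \<le> 9" for y z
    unfolding cnt_eq[OF h3 ha]
    by (cases y) (simp_all only: chk_G1_G0 chk_G1_G1 chk_G1_G2 chk_G1_G3 chk_G1_G4 chk_G1_G5 chk_G1_G6 chk_G1_G7 chk_G1_G8 chk_G1_G9 chk_G1_G10 chk_G1_G11 chk_G1_G12 chk_G1_G13 chk_G1_G14 chk_G1_G15 chk_G1_G16 chk_G1_G17 chk_G1_G18 chk_G1_G19 chk_G1_G20 chk_G1_G21 chk_G1_G22 chk_G1_G23 chk_G1_G24 chk_G1_G25 chk_G1_G26)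
  moreover have "cnt (G0, G1, z) \<le> 9" for z
    unfolding cnt_eq[OF h3 ha] by (rule chk_G0_G1)
  ultimately show ?thesis using cnt_last by blast
qed

definition vphi :: "'a::field \<Rightarrow> gf \<times> gf \<times> gf \<Rightarrow> 'a vec3" where
  "vphi \<alpha> p = (phi \<alpha> (fst p), phi \<alpha> (fst (snd p)), phi \<alpha> (snd (snd p)))"

definition gnrm :: "gf \<times> gf \<times> gf \<Rightarrow> bool" where
  "gnrm p \<longleftrightarrow> fst p = G1 \<or> (fst p = G0 \<and> fst (snd p) = G1) \<or> (fst p = G0 \<and> fst (snd p) = G0 \<and> snd (snd p) = G1)"

definition arcB :: "'a::field \<Rightarrow> 'a vec3 set set" where
  "arcB \<alpha> = (\<lambda>p. span1 (vphi \<alpha> p)) ` set ptsList"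

lemma pts_gnrm: "\<forall>p\<in>set ptsList. gnrm p" by (simp add: ptsList_def gnrm_def)
lemma pts_distinct: "distinct ptsList" by (simp add: ptsList_def)
lemma len_pts: "length ptsList = 201" by (simp add: ptsList_def)

lemma nrm_vphi: "gnrm p \<Longrightarrow> nrm (vphi \<alpha> p)"
  by (auto simp: gnrm_def nrm_def vphi_def phi_G0 phi_G1)

lemma nrm_nz: "nrm v \<Longrightarrow> v \<noteq> (0,0,0)"
  by (auto simp: nrm_def)

lemma dot_vphi:
  fixes \<alpha> :: "'a::field"
  assumes h3: "(3::'a) = 0" and ha: "\<alpha>^3 = \<alpha> + 1"
  shows "dot (vphi \<alpha> m) (vphi \<alpha> p) = phi \<alpha> (dotg m p)"
  by (simp add: dot_def vphi_def dotg_def phi_add[OF h3] phi_mul[OF h3 ha])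

lemma vphi_inj:
  fixes \<alpha> :: "'a::field"
  assumes h3: "(3::'a) = 0" and ha: "\<alpha>^3 = \<alpha> + 1" and e: "vphi \<alpha> p = vphi \<alpha> q"
  shows "p = q"
proof -
  have inj: "inj (phi \<alpha>)" by (rule phi_inj[OF h3 ha])
  obtain p1 p2 p3 where p: "p = (p1,p2,p3)" by (cases p) auto
  obtain q1 q2 q3 where q: "q = (q1,q2,q3)" by (cases q) auto
  show ?thesis using e inj unfolding p q vphi_def by (auto dest: injD)
qed

lemma inj_B:
  fixes \<alpha> :: "'a::field"
  assumes h3: "(3::'a) = 0" and ha: "\<alpha>^3 = \<alpha> + 1"
  shows "inj_on (\<lambda>p. span1 (vphi \<alpha> p)) (set ptsList)"
proof (rule inj_onI)
  fix p q assume "p \<in> set ptsList" "q \<in> set ptsList" "span1 (vphi \<alpha> p) = span1 (vphi \<alpha> q)"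
  hence "vphi \<alpha> p = vphi \<alpha> q" using nrm_span1_inj nrm_vphi pts_gnrm by blast
  thus "p = q" by (rule vphi_inj[OF h3 ha])
qed

lemma lines_cover:
  fixes \<alpha> :: "'a::{field,finite}"
  assumes c: "card (UNIV :: 'a set) = 27" and h3: "(3::'a) = 0" and ha: "\<alpha>^3 = \<alpha> + 1"
    and n: "nrm n"
  shows "\<exists>m\<in>set linesList. n = vphi \<alpha> m"
proof -
  have inj: "inj (phi \<alpha>)" by (rule phi_inj[OF h3 ha])
  obtain n1 n2 n3 where nn: "n = (n1,n2,n3)" by (cases n) auto
  obtain x where x: "phi \<alpha> x = n1" using phi_surj[OF c h3 ha] by blast
  obtain y where y: "phi \<alpha> y = n2" using phi_surj[OF c h3 ha] by blast
  obtain z where z: "phi \<alpha> z = n3" using phi_surj[OF c h3 ha] by blast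
  have e: "n = vphi \<alpha> (x,y,z)" by (simp add: vphi_def nn x y z)
  have one: "phi \<alpha> t = 1 \<Longrightarrow> t = G1" for t using inj phi_G1 by (metis injD)
  have zero: "phi \<alpha> t = 0 \<Longrightarrow> t = G0" for t using phi_zero[OF h3 ha] by blast
  have "(x,y,z) \<in> set linesList"
    using n unfolding nn nrm_def
    by (auto simp: linesList_def allg_UNIV x[symmetric] y[symmetric] z[symmetric] dest!: one zero)
  thus ?thesis using e by blast
qed

lemma count_line:
  fixes \<alpha> :: "'a::field" and u w :: "'a vec3"
  assumes h3: "(3::'a) = 0" and ha: "\<alpha>^3 = \<alpha> + 1" and ind: "lin_indep2 u w"
    and c: "c \<noteq> 0" and m: "vsmult c (cross u w) = vphi \<alpha> m"
  shows "card {P \<in> arcB \<alpha>. P \<subseteq> span2 u w} = cnt m"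
proof -
  have key: "span1 (vphi \<alpha> p) \<subseteq> span2 u w \<longleftrightarrow> dotg m p = G0" for p
  proof -
    have "span1 (vphi \<alpha> p) \<subseteq> span2 u w \<longleftrightarrow> dot (cross u w) (vphi \<alpha> p) = 0"
      using span1_sub_iff span2_iff[OF ind] by blast
    also have "\<dots> \<longleftrightarrow> dot (vsmult c (cross u w)) (vphi \<alpha> p) = 0"
      using c by (simp add: dot_smult)
    also have "\<dots> \<longleftrightarrow> phi \<alpha> (dotg m p) = 0" by (simp add: m dot_vphi[OF h3 ha])
    also have "\<dots> \<longleftrightarrow> dotg m p = G0" by (rule phi_zero[OF h3 ha])
    finally show ?thesis .
  qed
  have "{P \<in> arcB \<alpha>. P \<subseteq> span2 u w} = (\<lambda>p. span1 (vphi \<alpha> p)) ` set (filter (\<lambda>p. dotg m p = G0) ptsList)"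
    unfolding arcB_def using key by auto
  moreover have "inj_on (\<lambda>p. span1 (vphi \<alpha> p)) (set (filter (\<lambda>p. dotg m p = G0) ptsList))"
    using inj_B[OF h3 ha] by (rule inj_on_subset) auto
  ultimately have "card {P \<in> arcB \<alpha>. P \<subseteq> span2 u w} = card (set (filter (\<lambda>p. dotg m p = G0) ptsList))"
    by (simp add: card_image)
  also have "\<dots> = length (filter (\<lambda>p. dotg m p = G0) ptsList)"
    by (metis distinct_card distinct_filter pts_distinct)
  finally show ?thesis by (simp add: cnt_def)
qed

lemma arc_exists:
  fixes \<alpha> :: "'a::{field,finite}"
  assumes cd: "card (UNIV :: 'a set) = 27" and h3: "(3::'a) = 0" and ha: "\<alpha>^3 = \<alpha> + 1"
  shows "is_arc (arcB \<alpha>) 201 9"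
proof -
  have sub: "arcB \<alpha> \<subseteq> pg_points"
  proof
    fix P assume "P \<in> arcB \<alpha>"
    then obtain p where p: "p \<in> set ptsList" "P = span1 (vphi \<alpha> p)" unfolding arcB_def by blast
    have "vphi \<alpha> p \<noteq> (0,0,0)" using p(1) pts_gnrm nrm_vphi nrm_nz by blast
    thus "P \<in> pg_points" unfolding pg_points_def span1_def p(2) by blast
  qed
  have fin: "finite (arcB \<alpha>)" unfolding arcB_def by simp
  have card: "card (arcB \<alpha>) = 201"
    unfolding arcB_def using card_image[OF inj_B[OF h3 ha]] distinct_card[OF pts_distinct] len_pts by simp
  have bound: "\<forall>L\<in>pg_lines. card {P \<in> arcB \<alpha>. P \<subseteq> L} \<le> 9"
  proof
    fix L :: "'a vec3 set" assume "L \<in> pg_lines"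
    then obtain u w where ind: "lin_indep2 u w" and L: "L = span2 u w"
      unfolding pg_lines_def span2_def by blast
    obtain c where c: "c \<noteq> 0" "nrm (vsmult c (cross u w))"
      using nrm_exists[OF cross_nz[OF ind]] by blast
    obtain m where m: "m \<in> set linesList" "vsmult c (cross u w) = vphi \<alpha> m"
      using lines_cover[OF cd h3 ha c(2)] by blast
    show "card {P \<in> arcB \<alpha>. P \<subseteq> L} \<le> 9"
      unfolding L count_line[OF h3 ha ind c(1) m(2)] using cnt_all[OF h3 ha m(1)] .
  qed
  have ex: "\<exists>L\<in>pg_lines. card {P \<in> arcB \<alpha>. P \<subseteq> L} = 9"
  proof -
    let ?u = "(0, 1, 0) :: 'a vec3"
    let ?w = "(-1, 0, 1) :: 'a vec3"
    have ind: "lin_indep2 ?u ?w" unfolding lin_indep2_def vadd_def vsmult_def by simp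
    have cr: "vsmult 1 (cross ?u ?w) = vphi \<alpha> (G1, G0, G1)"
      by (simp add: cross_def vsmult_def vphi_def phi_G0 phi_G1)
    have "span2 ?u ?w \<in> pg_lines" unfolding pg_lines_def span2_def using ind by blast
    moreover have "card {P \<in> arcB \<alpha>. P \<subseteq> span2 ?u ?w} = 9"
      using count_line[OF h3 ha ind _ cr] cnt9 by simp
    ultimately show ?thesis by blast
  qed
  show ?thesis unfolding is_arc_def using sub fin card bound ex by blast
qed


theorem mainTheorem13:
  assumes "card (UNIV :: 'a::{field,finite} set) = 27"
  shows "(\<exists>B :: 'a vec3 set set. is_arc B 201 9) \<and> m_arc 9 TYPE('a) \<ge> 201"
proof -
  have h3: "(3::'a) = 0" by (rule three_zero[OF assms])
  obtain \<alpha> :: 'a where ha: "\<alpha>^3 = \<alpha> + 1" using root_exists[OF assms] by blast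
  have arc: "is_arc (arcB \<alpha>) 201 9" by (rule arc_exists[OF assms h3 ha])
  have fin: "finite {n. \<exists>B :: 'a vec3 set set. is_arc B n 9}"
  proof (rule finite_subset)
    show "{n. \<exists>B :: 'a vec3 set set. is_arc B n 9} \<subseteq> {..card (UNIV :: 'a vec3 set set)}"
    proof
      fix n assume "n \<in> {n. \<exists>B :: 'a vec3 set set. is_arc B n 9}"
      then obtain B :: "'a vec3 set set" where "is_arc B n 9" by blast
      hence "n = card B" by (simp add: is_arc_def)
      moreover have "card B \<le> card (UNIV :: 'a vec3 set set)" by (rule card_mono) auto
      ultimately show "n \<in> {..card (UNIV :: 'a vec3 set set)}" by simp
    qed
  qed simp
  have "201 \<le> m_arc 9 TYPE('a)" unfolding m_arc_def using arc fin by (auto intro: Max_ge)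
  thus ?thesis using arc by blast
qed

end
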